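(* Let $G$ be a finitely generated group and $A$ a finitely generated abelian group on which $G$ acts with finite image in $\mathrm{Aut}(A)$. If a $2$-cocycle $\sigma:G\times G\to A$ is either right weakly bounded or left weakly bounded, then $\sigma$ is cohomologous to a $2$-cocycle that is both right and left weakly bounded.
   Context: The action is written $a\mapsto a^g$. A $2$-cocycle is $\sigma:G\times G\to A$ with $\sigma(g,h_1h_2)=\sigma(g,h_1)^{h_2}+\sigma(gh_1,h_2)-\sigma(h_1,h_2)$; two cocycles are cohomologous if they differ by $(g,h)\mapsto f(g)^h+f(h)-f(gh)$ for some $f:G\to A$. A cocycle $\sigma$ is left weakly bounded if $\sigma(g,G)$ is finite for every $g\in G$, and right weakly bounded if $\sigma(G,g)$ is finite for every $g\in G$. *)

theory Defs
  imports "HOL-Algebra.Algebra"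
begin

text \<open>The coefficient group A is a HOL-Algebra commutative group, written
multiplicatively (the paper writes A additively). The right action
a \<mapsto> a^g is act g a.\<close>

definition fin_gen_group :: "('a, 'm) monoid_scheme \<Rightarrow> bool" where
  "fin_gen_group G \<longleftrightarrow> (\<exists>S. finite S \<and> S \<subseteq> carrier G \<and> generate G S = carrier G)"

definition right_action_by_auts ::
  "('a, 'm) monoid_scheme \<Rightarrow> ('b, 'n) monoid_scheme \<Rightarrow> ('a \<Rightarrow> 'b \<Rightarrow> 'b) \<Rightarrow> bool" where
  "right_action_by_auts G A act \<longleftrightarrow>
     (\<forall>g\<in>carrier G. act g \<in> iso A A) \<and>
     (\<forall>a\<in>carrier A. act \<one>\<^bsub>G\<^esub> a = a) \<and>
     (\<forall>g\<in>carrier G. \<forall>h\<in>carrier G. \<forall>a\<in>carrier A. act (g \<otimes>\<^bsub>G\<^esub> h) a = act h (act g a))"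

definition finite_action_image ::
  "('a, 'm) monoid_scheme \<Rightarrow> ('b, 'n) monoid_scheme \<Rightarrow> ('a \<Rightarrow> 'b \<Rightarrow> 'b) \<Rightarrow> bool" where
  "finite_action_image G A act \<longleftrightarrow> finite ((\<lambda>g. restrict (act g) (carrier A)) ` carrier G)"

definition two_cocycle ::
  "('a, 'm) monoid_scheme \<Rightarrow> ('b, 'n) monoid_scheme \<Rightarrow> ('a \<Rightarrow> 'b \<Rightarrow> 'b) \<Rightarrow> ('a \<Rightarrow> 'a \<Rightarrow> 'b) \<Rightarrow> bool" where
  "two_cocycle G A act \<sigma> \<longleftrightarrow>
     (\<forall>g\<in>carrier G. \<forall>h\<in>carrier G. \<sigma> g h \<in> carrier A) \<and>
     (\<forall>g\<in>carrier G. \<forall>h1\<in>carrier G. \<forall>h2\<in>carrier G.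
        \<sigma> g (h1 \<otimes>\<^bsub>G\<^esub> h2) =
          act h2 (\<sigma> g h1) \<otimes>\<^bsub>A\<^esub> \<sigma> (g \<otimes>\<^bsub>G\<^esub> h1) h2 \<otimes>\<^bsub>A\<^esub> inv\<^bsub>A\<^esub> (\<sigma> h1 h2))"

definition cohomologous ::
  "('a, 'm) monoid_scheme \<Rightarrow> ('b, 'n) monoid_scheme \<Rightarrow> ('a \<Rightarrow> 'b \<Rightarrow> 'b) \<Rightarrow> ('a \<Rightarrow> 'a \<Rightarrow> 'b) \<Rightarrow> ('a \<Rightarrow> 'a \<Rightarrow> 'b) \<Rightarrow> bool" where
  "cohomologous G A act \<sigma> \<tau> \<longleftrightarrow>
     (\<exists>f. f \<in> carrier G \<rightarrow> carrier A \<and>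
        (\<forall>g\<in>carrier G. \<forall>h\<in>carrier G.
           \<tau> g h = \<sigma> g h \<otimes>\<^bsub>A\<^esub> (act h (f g) \<otimes>\<^bsub>A\<^esub> f h \<otimes>\<^bsub>A\<^esub> inv\<^bsub>A\<^esub> (f (g \<otimes>\<^bsub>G\<^esub> h)))))"

definition left_weakly_bounded :: "('a, 'm) monoid_scheme \<Rightarrow> ('a \<Rightarrow> 'a \<Rightarrow> 'b) \<Rightarrow> bool" where
  "left_weakly_bounded G \<sigma> \<longleftrightarrow> (\<forall>g\<in>carrier G. finite ((\<lambda>h. \<sigma> g h) ` carrier G))"

definition right_weakly_bounded :: "('a, 'm) monoid_scheme \<Rightarrow> ('a \<Rightarrow> 'a \<Rightarrow> 'b) \<Rightarrow> bool" where
  "right_weakly_bounded G \<sigma> \<longleftrightarrow> (\<forall>g\<in>carrier G. finite ((\<lambda>h. \<sigma> h g) ` carrier G))"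

end

theory Submission
  imports Defs
begin

lemma (in comm_group) finprod_int_pow:
  assumes "f \<in> I \<rightarrow> carrier G"
  shows "finprod G (\<lambda>i. f i [^] (k::int)) I = (finprod G f I) [^] k"
  using assms
proof (induct I rule: infinite_finite_induct)
  case (infinite A) then show ?case by simp
next
  case empty then show ?case by simp
next
  case (insert a A)
  then have fa: "f a \<in> carrier G" and fA: "f \<in> A \<rightarrow> carrier G" by auto
  have "finprod G (\<lambda>i. f i [^] k) (insert a A) = f a [^] k \<otimes> finprod G (\<lambda>i. f i [^] k) A"
    using insert fa fA by (subst finprod_insert) auto
  also have "\<dots> = f a [^] k \<otimes> (finprod G f A) [^] k" using insert fA by simp
  also have "\<dots> = (f a \<otimes> finprod G f A) [^] k" using fa fA by (simp add: int_pow_distrib)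
  also have "\<dots> = (finprod G f (insert a A)) [^] k" using insert fa fA by (subst finprod_insert) auto
  finally show ?case .
qed

lemma (in comm_group) finprod_int_pow_add:
  assumes "x \<in> I \<rightarrow> carrier G"
  shows "finprod G (\<lambda>i. x i [^] (a i + b i :: int)) I
       = finprod G (\<lambda>i. x i [^] a i) I \<otimes> finprod G (\<lambda>i. x i [^] b i) I"
proof -
  have "finprod G (\<lambda>i. x i [^] (a i + b i :: int)) I = finprod G (\<lambda>i. x i [^] a i \<otimes> x i [^] b i) I"
  proof (rule finprod_cong')
    show "(\<lambda>i. x i [^] a i \<otimes> x i [^] b i) \<in> I \<rightarrow> carrier G" using assms by auto
    fix i assume "i \<in> I"
    then have "x i \<in> carrier G" using assms by auto
    then show "x i [^] (a i + b i) = x i [^] a i \<otimes> x i [^] b i" by (rule int_pow_mult)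
  qed simp
  also have "\<dots> = finprod G (\<lambda>i. x i [^] a i) I \<otimes> finprod G (\<lambda>i. x i [^] b i) I"
    using assms by (intro finprod_multf) auto
  finally show ?thesis .
qed

lemma (in group) sub_nat_pow:
  assumes "subgroup H G" "h \<in> H" shows "h [^] (n::nat) \<in> H"
  using subgroup_int_pow_closed[OF assms, of "int n"] int_pow_int[where G=G and x=h and n=n] by simp

lemma (in group) hom_on_sub_one:
  assumes "subgroup H G" "\<forall>x\<in>H. \<forall>y\<in>H. \<psi> (x \<otimes> y) = \<psi> x + (\<psi> y::int)"
  shows "\<psi> \<one> = 0"
proof -
  have "\<one> \<in> H" by (rule subgroup.one_closed[OF assms(1)])
  then have "\<psi> (\<one> \<otimes> \<one>) = \<psi> \<one> + \<psi> \<one>" using assms by blast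
  then show ?thesis by simp
qed

lemma (in group) hom_on_sub_pow:
  assumes H: "subgroup H G" and hom: "\<forall>x\<in>H. \<forall>y\<in>H. \<psi> (x \<otimes> y) = \<psi> x + (\<psi> y::int)"
    and x: "x \<in> H"
  shows "\<psi> (x [^] (k::int)) = k * \<psi> x"
proof -
  have xc: "x \<in> carrier G" by (rule subgroup.mem_carrier[OF H x])
  have nat: "\<psi> (x [^] (n::nat)) = int n * \<psi> x" for n
  proof (induct n)
    case 0 then show ?case using hom_on_sub_one[OF H hom] by simp
  next
    case (Suc n)
    have "x [^] Suc n = x [^] n \<otimes> x" by simp
    moreover have "x [^] n \<in> H" by (rule sub_nat_pow[OF H x])
    ultimately have "\<psi> (x [^] Suc n) = \<psi> (x [^] n) + \<psi> x" using hom x by simp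
    then show ?case using Suc by (simp add: algebra_simps)
  qed
  have inv: "\<psi> (inv y) = - \<psi> y" if "y \<in> H" for y
  proof -
    have "inv y \<in> H" by (rule subgroup.m_inv_closed[OF H that])
    then have "\<psi> (y \<otimes> inv y) = \<psi> y + \<psi> (inv y)" using hom that by simp
    moreover have "y \<in> carrier G" by (rule subgroup.mem_carrier[OF H that])
    then have "y \<otimes> inv y = \<one>" by simp
    ultimately show ?thesis using hom_on_sub_one[OF H hom] by simp
  qed
  show ?thesis
  proof (cases "k \<ge> 0")
    case True
    then have "x [^] k = x [^] (nat k)" using int_pow_int[where G=G and x=x and n="nat k"] by simp
    then have "\<psi> (x [^] k) = \<psi> (x [^] (nat k))" by (rule arg_cong)
    also have "\<dots> = int (nat k) * \<psi> x" by (rule nat)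
    also have "\<dots> = k * \<psi> x" using True by simp
    finally show ?thesis .
  next
    case False
    then have "x [^] k = inv (x [^] (nat (-k)))" using int_pow_neg_int[OF xc, of "nat (-k)"] by simp
    moreover have "x [^] (nat (-k)) \<in> H" by (rule sub_nat_pow[OF H x])
    ultimately have "\<psi> (x [^] k) = - \<psi> (x [^] (nat (-k)))" using inv by metis
    also have "\<dots> = - (int (nat (-k)) * \<psi> x)" using nat[of "nat (-k)"] by (rule arg_cong)
    also have "\<dots> = k * \<psi> x" using False by simp
    finally show ?thesis .
  qed
qed

lemma (in comm_group) gen_insert:
  assumes S: "S \<subseteq> carrier G" and s: "s \<in> carrier G"
  shows "generate G (insert s S) = {b \<otimes> s [^] (j::int) | b j. b \<in> generate G S}"
    (is "_ = ?R")
proof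
  have gS: "generate G S \<subseteq> carrier G" using generate_incl[OF S] .
  have sub: "subgroup (generate G S) G" using generate_is_subgroup[OF S] .
  have "subgroup ?R G"
  proof (rule subgroupI)
    show "?R \<subseteq> carrier G" using gS s by auto
    have "\<one> = \<one> \<otimes> s [^] (0::int)" by simp
    then show "?R \<noteq> {}" using subgroup.one_closed[OF sub] by blast
  next
    fix a assume "a \<in> ?R"
    then obtain b j where b: "b \<in> generate G S" and a: "a = b \<otimes> s [^] (j::int)" by blast
    have bc: "b \<in> carrier G" using b gS by blast
    have "inv a = inv b \<otimes> s [^] (-j)" using a bc s by (simp add: inv_mult int_pow_neg)
    moreover have "inv b \<in> generate G S" by (rule subgroup.m_inv_closed[OF sub b])
    ultimately show "inv a \<in> ?R" by blast
  next
    fix a c assume "a \<in> ?R" "c \<in> ?R"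
    then obtain b j b' j' where b: "b \<in> generate G S" and a: "a = b \<otimes> s [^] (j::int)"
      and b': "b' \<in> generate G S" and c: "c = b' \<otimes> s [^] (j'::int)" by blast
    have bc: "b \<in> carrier G" "b' \<in> carrier G" using b b' gS by auto
    have "a \<otimes> c = (b \<otimes> b') \<otimes> s [^] (j + j')" using a c bc s by (simp add: int_pow_mult m_ac)
    moreover have "b \<otimes> b' \<in> generate G S" by (rule subgroup.m_closed[OF sub b b'])
    ultimately show "a \<otimes> c \<in> ?R" by blast
  qed
  moreover have "insert s S \<subseteq> ?R"
  proof
    fix x assume "x \<in> insert s S"
    then show "x \<in> ?R"
    proof
      assume "x = s"
      then have "x = \<one> \<otimes> s [^] (1::int)" using s by simp
      then show ?thesis using subgroup.one_closed[OF sub] by blast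
    next
      assume "x \<in> S"
      then have "x = x \<otimes> s [^] (0::int)" using S by auto
      then show ?thesis using \<open>x \<in> S\<close> generate.incl[of x S G] by blast
    qed
  qed
  ultimately show "generate G (insert s S) \<subseteq> ?R" using generate_subgroup_incl by blast
next
  have sub': "subgroup (generate G (insert s S)) G" using generate_is_subgroup S s by auto
  show "?R \<subseteq> generate G (insert s S)"
  proof
    fix x assume "x \<in> ?R"
    then obtain b j where b: "b \<in> generate G S" and x: "x = b \<otimes> s [^] (j::int)" by blast
    have "b \<in> generate G (insert s S)" using b mono_generate[of S "insert s S"] by blast
    moreover have "s [^] j \<in> generate G (insert s S)"
      using subgroup_int_pow_closed[OF sub'] generate.incl[of s "insert s S" G] by blast
    ultimately show "x \<in> generate G (insert s S)" using x subgroup.m_closed[OF sub'] by simp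
  qed
qed


definition tors :: "('b, 'n) monoid_scheme \<Rightarrow> 'b set \<Rightarrow> 'b set" where
  "tors G H = {x \<in> H. \<exists>n::nat. n > 0 \<and> x [^]\<^bsub>G\<^esub> n = \<one>\<^bsub>G\<^esub>}"

definition fgdata :: "('b, 'n) monoid_scheme \<Rightarrow> 'b set \<Rightarrow> nat \<Rightarrow> nat \<Rightarrow> (nat \<Rightarrow> 'b \<Rightarrow> int) \<Rightarrow> (nat \<Rightarrow> 'b) \<Rightarrow> bool" where
  "fgdata G H N m \<psi> w \<longleftrightarrow> N > 0 \<and>
     (\<forall>j<m. \<forall>x\<in>H. \<forall>y\<in>H. \<psi> j (x \<otimes>\<^bsub>G\<^esub> y) = \<psi> j x + \<psi> j y) \<and>
     (\<forall>j<m. w j \<in> H) \<and>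
     (\<forall>a\<in>H. finprod G (\<lambda>j. w j [^]\<^bsub>G\<^esub> (\<psi> j a)) {..<m} = a [^]\<^bsub>G\<^esub> N) \<and>
     finite (tors G H)"

lemma (in group) pow_nat_int: "x \<in> carrier G \<Longrightarrow> x [^] (n::nat) = x [^] (int n)"
  using int_pow_int[where G=G and x=x and n=n] by simp

lemma (in comm_group) fg_case1:
  assumes S: "S \<subseteq> carrier G" and s: "s \<in> carrier G"
    and indep: "\<forall>j::int. s [^] j \<in> generate G S \<longrightarrow> j = 0"
    and D: "fgdata G (generate G S) N m \<psi> w"
  shows "\<exists>N m \<psi> w. fgdata G (generate G (insert s S)) N m \<psi> w"
proof -
  let ?H = "generate G S"
  have sub: "subgroup ?H G" using generate_is_subgroup[OF S] .
  have Hc: "?H \<subseteq> carrier G" using generate_incl[OF S] .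
  have H': "generate G (insert s S) = {b \<otimes> s [^] (j::int) | b j. b \<in> ?H}"
    using gen_insert[OF S s] .
  from D have N: "N > 0" and hom: "\<forall>j<m. \<forall>x\<in>?H. \<forall>y\<in>?H. \<psi> j (x \<otimes> y) = \<psi> j x + \<psi> j y"
    and wH: "\<forall>j<m. w j \<in> ?H"
    and prodf: "\<forall>a\<in>?H. finprod G (\<lambda>j. w j [^] (\<psi> j a)) {..<m} = a [^] N"
    and tor: "finite (tors G ?H)" unfolding fgdata_def by auto
  have uniq: "b = b' \<and> i = i'" if "b \<in> ?H" "b' \<in> ?H" "b \<otimes> s [^] (i::int) = b' \<otimes> s [^] (i'::int)" for b b' i i'
  proof -
    have bc: "b \<in> carrier G" "b' \<in> carrier G" using that Hc by auto
    have e1: "s [^] i = inv b \<otimes> (b' \<otimes> s [^] i')"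
      using that(3) bc s inv_solve_left[of "s [^] i" b "b' \<otimes> s [^] i'"] by simp
    have "s [^] (i - i') = inv b \<otimes> b'"
      unfolding int_pow_diff[OF s] e1 using bc s by (simp add: m_assoc)
    moreover have "inv b \<otimes> b' \<in> ?H"
      using subgroup.m_closed[OF sub subgroup.m_inv_closed[OF sub that(1)] that(2)] .
    ultimately have "i - i' = 0" using indep by metis
    then have "i = i'" by simp
    then show ?thesis using that(3) bc s by simp
  qed
  define rep where "rep x = (SOME p. fst p \<in> ?H \<and> x = fst p \<otimes> s [^] (snd p::int))" for x
  have rep: "rep (b \<otimes> s [^] i) = (b, i)" if "b \<in> ?H" for b i
  proof -
    have "\<exists>p. fst p \<in> ?H \<and> b \<otimes> s [^] i = fst p \<otimes> s [^] (snd p::int)" using that by force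
    then have "fst (rep (b \<otimes> s [^] i)) \<in> ?H \<and> b \<otimes> s [^] i = fst (rep (b \<otimes> s [^] i)) \<otimes> s [^] snd (rep (b \<otimes> s [^] i))"
      unfolding rep_def by (rule someI_ex)
    then show ?thesis using uniq[OF that] by (metis prod.collapse)
  qed
  define \<psi>' where "\<psi>' j x = (if j < m then \<psi> j (fst (rep x)) else snd (rep x))" for j x
  define w' where "w' = w(m := s [^] N)"
  have "fgdata G (generate G (insert s S)) N (Suc m) \<psi>' w'"
    unfolding fgdata_def
  proof (intro conjI allI impI ballI)
    show "N > 0" using N .
  next
    fix j x y assume j: "j < Suc m" and x: "x \<in> generate G (insert s S)" and y: "y \<in> generate G (insert s S)"
    from x obtain b i where b: "b \<in> ?H" and xb: "x = b \<otimes> s [^] (i::int)" using H' by blast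
    from y obtain c k where c: "c \<in> ?H" and yc: "y = c \<otimes> s [^] (k::int)" using H' by blast
    have bc: "b \<in> carrier G" "c \<in> carrier G" using b c Hc by auto
    have xy: "x \<otimes> y = (b \<otimes> c) \<otimes> s [^] (i + k)" using xb yc bc s by (simp add: int_pow_mult m_ac)
    have bcH: "b \<otimes> c \<in> ?H" by (rule subgroup.m_closed[OF sub b c])
    have "\<psi>' j (x \<otimes> y) = \<psi>' j ((b \<otimes> c) \<otimes> s [^] (i + k))" using xy by simp
    also have "\<dots> = \<psi>' j x + \<psi>' j y"
      unfolding \<psi>'_def xb yc rep[OF bcH] rep[OF b] rep[OF c] using hom b c by auto
    finally show "\<psi>' j (x \<otimes> y) = \<psi>' j x + \<psi>' j y" .
  next
    fix j assume "j < Suc m"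
    then show "w' j \<in> generate G (insert s S)"
    proof (cases "j < m")
      case True
      then have "w j \<in> ?H" using wH by auto
      then have "w j \<otimes> s [^] (0::int) \<in> generate G (insert s S)" unfolding H' by blast
      then show ?thesis using True \<open>w j \<in> ?H\<close> Hc unfolding w'_def by auto
    next
      case False
      then have "j = m" using \<open>j < Suc m\<close> by simp
      have "\<one> \<otimes> s [^] (int N) \<in> generate G (insert s S)" unfolding H'
        using subgroup.one_closed[OF sub] by blast
      then show ?thesis using \<open>j = m\<close> s unfolding w'_def by (simp add: pow_nat_int)
    qed
  next
    fix a assume a: "a \<in> generate G (insert s S)"
    from a obtain b i where b: "b \<in> ?H" and ab: "a = b \<otimes> s [^] (i::int)" using H' by blast
    have bc: "b \<in> carrier G" using b Hc by auto
    have wc: "\<forall>j<m. w j \<in> carrier G" using wH Hc by auto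
    have "finprod G (\<lambda>j. w' j [^] \<psi>' j a) {..<Suc m}
        = (w' m [^] \<psi>' m a) \<otimes> finprod G (\<lambda>j. w' j [^] \<psi>' j a) {..<m}"
      using wc s unfolding lessThan_Suc w'_def by (subst finprod_insert) (auto simp: Pi_def)
    also have "finprod G (\<lambda>j. w' j [^] \<psi>' j a) {..<m} = finprod G (\<lambda>j. w j [^] \<psi> j b) {..<m}"
      using wc by (intro finprod_cong') (auto simp: w'_def \<psi>'_def ab rep[OF b] Pi_def)
    also have "\<dots> = b [^] N" using prodf b by auto
    also have "w' m [^] \<psi>' m a = (s [^] N) [^] i" unfolding w'_def \<psi>'_def ab rep[OF b] by simp
    also have "\<dots> = (s [^] i) [^] N" using s by (simp add: pow_nat_int int_pow_pow mult.commute)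
    finally have "finprod G (\<lambda>j. w' j [^] \<psi>' j a) {..<Suc m} = (s [^] i) [^] N \<otimes> b [^] N" .
    also have "\<dots> = a [^] N" unfolding ab using bc s by (simp add: pow_mult_distrib m_comm)
    finally show "finprod G (\<lambda>j. w' j [^] \<psi>' j a) {..<Suc m} = a [^] N" .
  next
    have "tors G (generate G (insert s S)) \<subseteq> tors G ?H"
    proof
      fix x assume "x \<in> tors G (generate G (insert s S))"
      then obtain n::nat where x: "x \<in> generate G (insert s S)" and n: "n > 0" and xn: "x [^] n = \<one>"
        unfolding tors_def by blast
      from x obtain b i where b: "b \<in> ?H" and xb: "x = b \<otimes> s [^] (i::int)" using H' by blast
      have bc: "b \<in> carrier G" using b Hc by auto
      have "b [^] n \<otimes> s [^] (i * int n) = \<one>"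
      proof -
      have "\<one> = (b \<otimes> s [^] i) [^] n" using xn xb by simp
      also have "\<dots> = b [^] n \<otimes> (s [^] i) [^] n" using bc s by (simp add: pow_mult_distrib m_comm)
      also have "(s [^] i) [^] n = s [^] (i * int n)" using s by (simp add: pow_nat_int int_pow_pow)
      finally show ?thesis by simp
    qed
      then have "s [^] (i * int n) = inv (b [^] n)" using bc s
        by (metis inv_equality int_pow_closed m_comm nat_pow_closed)
      moreover have "inv (b [^] n) \<in> ?H"
        by (rule subgroup.m_inv_closed[OF sub sub_nat_pow[OF sub b]])
      ultimately have "i * int n = 0" using indep by metis
      then have "i = 0" using n by simp
      then have "x = b" using xb bc by simp
      then show "x \<in> tors G ?H" using b n xn unfolding tors_def by blast
    qed
    then show "finite (tors G (generate G (insert s S)))" using tor finite_subset by blast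
  qed
  then show ?thesis by blast
qed


lemma (in comm_group) fg_case2:
  assumes S: "S \<subseteq> carrier G" and s: "s \<in> carrier G"
    and dep: "s [^] (j0::int) \<in> generate G S" "j0 \<noteq> 0"
    and D: "fgdata G (generate G S) N m \<psi> w"
  shows "\<exists>N m \<psi> w. fgdata G (generate G (insert s S)) N m \<psi> w"
proof -
  let ?H = "generate G S"
  have sub: "subgroup ?H G" using generate_is_subgroup[OF S] .
  have Hc: "?H \<subseteq> carrier G" using generate_incl[OF S] .
  have H': "generate G (insert s S) = {b \<otimes> s [^] (j::int) | b j. b \<in> ?H}"
    using gen_insert[OF S s] .
  from D have N: "N > 0" and hom: "\<forall>j<m. \<forall>x\<in>?H. \<forall>y\<in>?H. \<psi> j (x \<otimes> y) = \<psi> j x + \<psi> j y"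
    and wH: "\<forall>j<m. w j \<in> ?H"
    and prodf: "\<forall>a\<in>?H. finprod G (\<lambda>j. w j [^] (\<psi> j a)) {..<m} = a [^] N"
    and tor: "finite (tors G ?H)" unfolding fgdata_def by auto
  define n0 where "n0 = \<bar>j0\<bar>"
  have n0: "n0 > 0" using dep(2) unfolding n0_def by simp
  define sn where "sn = s [^] n0"
  have snH: "sn \<in> ?H"
  proof (cases "j0 \<ge> 0")
    case True then show ?thesis using dep unfolding sn_def n0_def by simp
  next
    case False
    then have "s [^] n0 = inv (s [^] j0)" unfolding n0_def using s by (simp add: int_pow_neg)
    then show ?thesis unfolding sn_def using subgroup.m_inv_closed[OF sub dep(1)] by simp
  qed
  have snc0: "sn \<in> carrier G" using snH Hc by auto
  have homp: "\<psi> j (x [^] (k::int)) = k * \<psi> j x" if "j < m" "x \<in> ?H" for j x k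
    using hom_on_sub_pow[OF sub _ that(2)] hom that(1) by blast
  have wd: "n0 * \<psi> j b + i * \<psi> j sn = n0 * \<psi> j b' + i' * \<psi> j sn"
    if j: "j < m" and b: "b \<in> ?H" and b': "b' \<in> ?H" and eq: "b \<otimes> s [^] (i::int) = b' \<otimes> s [^] (i'::int)"
    for j b b' i i'
  proof -
    have bc: "b \<in> carrier G" "b' \<in> carrier G" using b b' Hc by auto
    have e1: "s [^] i = inv b \<otimes> (b' \<otimes> s [^] i')"
      using eq bc s inv_solve_left[of "s [^] i" b "b' \<otimes> s [^] i'"] by simp
    have sd: "s [^] (i - i') = inv b \<otimes> b'"
      unfolding int_pow_diff[OF s] e1 using bc s by (simp add: m_assoc)
    have sdH: "s [^] (i - i') \<in> ?H" unfolding sd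
      by (rule subgroup.m_closed[OF sub subgroup.m_inv_closed[OF sub b] b'])
    have "\<psi> j (s [^] (i - i')) = \<psi> j b' - \<psi> j b"
    proof -
      have "\<psi> j (inv b \<otimes> b') = \<psi> j (inv b) + \<psi> j b'"
        using hom j subgroup.m_inv_closed[OF sub b] b' by simp
      moreover have "\<psi> j (inv b) = - \<psi> j b"
        using homp[OF j b, of "-1"] bc by (simp add: int_pow_neg)
      ultimately show ?thesis unfolding sd by simp
    qed
    moreover have "\<psi> j ((s [^] (i - i')) [^] n0) = n0 * \<psi> j (s [^] (i - i'))" by (rule homp[OF j sdH])
    moreover have "(s [^] (i - i')) [^] n0 = sn [^] (i - i')"
      unfolding sn_def using s by (simp add: int_pow_pow mult.commute)
    moreover have "\<psi> j (sn [^] (i - i')) = (i - i') * \<psi> j sn" by (rule homp[OF j snH])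
    ultimately have "n0 * (\<psi> j b' - \<psi> j b) = (i - i') * \<psi> j sn" by simp
    then show ?thesis by (simp add: algebra_simps)
  qed
  define \<psi>' where "\<psi>' j x = (SOME v. \<exists>b\<in>?H. \<exists>i::int. x = b \<otimes> s [^] i \<and> v = n0 * \<psi> j b + i * \<psi> j sn)" for j x
  have \<psi>'_eq: "\<psi>' j (b \<otimes> s [^] i) = n0 * \<psi> j b + i * \<psi> j sn" if "j < m" "b \<in> ?H" for j b i
  proof -
    have ex: "\<exists>v. \<exists>b'\<in>?H. \<exists>i'::int. b \<otimes> s [^] i = b' \<otimes> s [^] i' \<and> v = n0 * \<psi> j b' + i' * \<psi> j sn"
      using that by blast
    obtain b' i' where b': "b' \<in> ?H" and eq: "b \<otimes> s [^] i = b' \<otimes> s [^] (i'::int)"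
      and v: "\<psi>' j (b \<otimes> s [^] i) = n0 * \<psi> j b' + i' * \<psi> j sn"
      using someI_ex[OF ex] unfolding \<psi>'_def by blast
    show ?thesis using v wd[OF that(1) that(2) b' eq] by simp
  qed
  define N' where "N' = N * nat n0"
  have "fgdata G (generate G (insert s S)) N' m \<psi>' w"
    unfolding fgdata_def
  proof (intro conjI allI impI ballI)
    show "N' > 0" using N n0 unfolding N'_def by simp
  next
    fix j x y assume j: "j < m" and x: "x \<in> generate G (insert s S)" and y: "y \<in> generate G (insert s S)"
    from x obtain b i where b: "b \<in> ?H" and xb: "x = b \<otimes> s [^] (i::int)" using H' by blast
    from y obtain c k where c: "c \<in> ?H" and yc: "y = c \<otimes> s [^] (k::int)" using H' by blast
    have bc: "b \<in> carrier G" "c \<in> carrier G" using b c Hc by auto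
    have xy: "x \<otimes> y = (b \<otimes> c) \<otimes> s [^] (i + k)" using xb yc bc s by (simp add: int_pow_mult m_ac)
    have bcH: "b \<otimes> c \<in> ?H" by (rule subgroup.m_closed[OF sub b c])
    have "\<psi>' j (x \<otimes> y) = \<psi>' j ((b \<otimes> c) \<otimes> s [^] (i + k))" using xy by simp
    also have "\<dots> = n0 * \<psi> j (b \<otimes> c) + (i + k) * \<psi> j sn" by (rule \<psi>'_eq[OF j bcH])
    also have "\<dots> = \<psi>' j x + \<psi>' j y"
      unfolding xb yc \<psi>'_eq[OF j b] \<psi>'_eq[OF j c] using hom j b c by (simp add: algebra_simps)
    finally show "\<psi>' j (x \<otimes> y) = \<psi>' j x + \<psi>' j y" .
  next
    fix j assume "j < m"
    then have "w j \<in> ?H" using wH by auto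
    then show "w j \<in> generate G (insert s S)" using mono_generate[of S "insert s S"] by blast
  next
    fix a assume a: "a \<in> generate G (insert s S)"
    from a obtain b i where b: "b \<in> ?H" and ab: "a = b \<otimes> s [^] (i::int)" using H' by blast
    have bc: "b \<in> carrier G" using b Hc by auto
    have snc: "sn \<in> carrier G" using snH Hc by auto
    have wc: "(\<lambda>j. w j) \<in> {..<m} \<rightarrow> carrier G" using wH Hc by auto
    have "finprod G (\<lambda>j. w j [^] \<psi>' j a) {..<m}
        = finprod G (\<lambda>j. w j [^] (n0 * \<psi> j b + i * \<psi> j sn)) {..<m}"
      using wc by (intro finprod_cong') (auto simp: ab \<psi>'_eq[OF _ b] Pi_def)
    also have "\<dots> = finprod G (\<lambda>j. w j [^] (n0 * \<psi> j b)) {..<m} \<otimes> finprod G (\<lambda>j. w j [^] (i * \<psi> j sn)) {..<m}"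
      by (rule finprod_int_pow_add[OF wc])
    also have "finprod G (\<lambda>j. w j [^] (n0 * \<psi> j b)) {..<m} = finprod G (\<lambda>j. (w j [^] \<psi> j b) [^] n0) {..<m}"
      using wc by (intro finprod_cong') (auto simp: Pi_def int_pow_pow mult.commute)
    also have "\<dots> = (finprod G (\<lambda>j. w j [^] \<psi> j b) {..<m}) [^] n0"
      using wc by (intro finprod_int_pow) (auto simp: Pi_def)
    also have "\<dots> = (b [^] N) [^] n0" using prodf b by simp
    also have "finprod G (\<lambda>j. w j [^] (i * \<psi> j sn)) {..<m} = finprod G (\<lambda>j. (w j [^] \<psi> j sn) [^] i) {..<m}"
      using wc by (intro finprod_cong') (auto simp: Pi_def int_pow_pow mult.commute)
    also have "\<dots> = (finprod G (\<lambda>j. w j [^] \<psi> j sn) {..<m}) [^] i"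
      using wc by (intro finprod_int_pow) (auto simp: Pi_def)
    also have "\<dots> = (sn [^] N) [^] i" using prodf snH by simp
    finally have "finprod G (\<lambda>j. w j [^] \<psi>' j a) {..<m} = (b [^] N) [^] n0 \<otimes> (sn [^] N) [^] i" .
    also have "(b [^] N) [^] n0 = b [^] (int N * n0)" using bc by (simp add: pow_nat_int int_pow_pow)
    also have "(sn [^] N) [^] i = s [^] (n0 * int N * i)" using s unfolding sn_def
      by (simp add: pow_nat_int int_pow_pow)
    also have "b [^] (int N * n0) \<otimes> s [^] (n0 * int N * i) = a [^] N'"
    proof -
      have "a [^] N' = a [^] (int N * n0)" unfolding N'_def using ab bc s n0 by (simp add: pow_nat_int)
      also have "\<dots> = b [^] (int N * n0) \<otimes> (s [^] i) [^] (int N * n0)"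
        unfolding ab using bc s by (simp add: int_pow_distrib)
      also have "(s [^] i) [^] (int N * n0) = s [^] (n0 * int N * i)" using s
        by (simp add: int_pow_pow mult.commute mult.left_commute)
      finally show ?thesis by simp
    qed
    finally show "finprod G (\<lambda>j. w j [^] \<psi>' j a) {..<m} = a [^] N'" .
  next
    let ?T = "tors G ?H"
    define B where "B t (r::int) = {b \<in> ?H. b [^] n0 = t \<otimes> inv (sn [^] r)}" for t r
    have Bfin: "finite (B t r)" if "t \<in> carrier G" "r \<in> {0..<n0}" for t r
    proof (cases "B t r = {}")
      case True then show ?thesis by simp
    next
      case False
      then obtain b0 where b0: "b0 \<in> B t r" by blast
      have b0c: "b0 \<in> carrier G" "b0 \<in> ?H" using b0 Hc unfolding B_def by auto
      have "B t r \<subseteq> (\<lambda>u. b0 \<otimes> u) ` ?T"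
      proof
        fix b assume bB: "b \<in> B t r"
        have bH: "b \<in> ?H" and bc: "b \<in> carrier G" using bB Hc unfolding B_def by auto
        have "inv b0 \<otimes> b \<in> ?H" by (rule subgroup.m_closed[OF sub subgroup.m_inv_closed[OF sub b0c(2)] bH])
        moreover have pw: "(inv b0 \<otimes> b) [^] nat n0 = \<one>"
        proof -
          have "(inv b0 \<otimes> b) [^] nat n0 = (inv b0 \<otimes> b) [^] n0" using b0c bc n0 by (simp add: pow_nat_int)
          also have "\<dots> = inv (b0 [^] n0) \<otimes> b [^] n0" using b0c bc by (simp add: int_pow_distrib int_pow_inv)
          also have "\<dots> = \<one>" using b0 bB that(1) snc0 unfolding B_def by simp
          finally show ?thesis .
        qed
        moreover have "\<exists>n::nat. n > 0 \<and> (inv b0 \<otimes> b) [^] n = \<one>"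
          using n0 by (intro exI[of _ "nat n0"] conjI pw) simp
        ultimately have "inv b0 \<otimes> b \<in> ?T" unfolding tors_def by blast
        moreover have "b = b0 \<otimes> (inv b0 \<otimes> b)" using b0c bc by (simp add: m_assoc[symmetric])
        ultimately show "b \<in> (\<lambda>u. b0 \<otimes> u) ` ?T" by blast
      qed
      then show ?thesis using tor finite_subset by blast
    qed
    have Tc: "?T \<subseteq> carrier G" using Hc unfolding tors_def by auto
    have "tors G (generate G (insert s S)) \<subseteq>
        (\<lambda>(b, r). b \<otimes> s [^] r) ` (\<Union>t\<in>?T. \<Union>r\<in>{0..<n0}. B t r \<times> {r})"
    proof
      fix x assume "x \<in> tors G (generate G (insert s S))"
      then obtain k::nat where x: "x \<in> generate G (insert s S)" and k: "k > 0" and xk: "x [^] k = \<one>"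
        unfolding tors_def by blast
      from x obtain b i where b: "b \<in> ?H" and xb: "x = b \<otimes> s [^] (i::int)" using H' by blast
      have bc: "b \<in> carrier G" using b Hc by auto
      have snc: "sn \<in> carrier G" using snH Hc by auto
      define r where "r = i mod n0"
      define q where "q = i div n0"
      have r: "r \<in> {0..<n0}" unfolding r_def using n0 by simp
      have iqr: "i = n0 * q + r" unfolding r_def q_def by simp
      define b1 where "b1 = b \<otimes> sn [^] q"
      have b1H: "b1 \<in> ?H" unfolding b1_def
        by (rule subgroup.m_closed[OF sub b subgroup_int_pow_closed[OF sub snH]])
      have b1c: "b1 \<in> carrier G" using b1H Hc by auto
      have xb1: "x = b1 \<otimes> s [^] r"
      proof -
        have "s [^] i = sn [^] q \<otimes> s [^] r" unfolding iqr sn_def using s by (simp add: int_pow_mult int_pow_pow)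
        then show ?thesis unfolding xb b1_def using bc s snc by (simp add: m_assoc)
      qed
      have xc: "x \<in> carrier G" using xb1 b1c s by simp
      have "x [^] n0 = b1 [^] n0 \<otimes> sn [^] r"
        unfolding xb1 sn_def using b1c s by (simp add: int_pow_distrib int_pow_pow mult.commute)
      define t where "t = x [^] n0"
      have tH: "t \<in> ?H" unfolding t_def \<open>x [^] n0 = b1 [^] n0 \<otimes> sn [^] r\<close>
        by (rule subgroup.m_closed[OF sub subgroup_int_pow_closed[OF sub b1H] subgroup_int_pow_closed[OF sub snH]])
      have "t [^] k = \<one>"
      proof -
        have "t [^] k = t [^] (int k)" using tH Hc by (simp add: pow_nat_int subsetD)
        also have "\<dots> = x [^] (n0 * int k)" unfolding t_def using xc by (simp add: int_pow_pow)
        also have "\<dots> = (x [^] (int k)) [^] n0" using xc by (simp add: int_pow_pow mult.commute)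
        also have "x [^] (int k) = \<one>" using xk xc by (simp add: pow_nat_int[symmetric])
        finally show ?thesis by simp
      qed
      then have tT: "t \<in> ?T" unfolding tors_def using tH k by blast
      have "b1 [^] n0 = t \<otimes> inv (sn [^] r)"
        unfolding t_def \<open>x [^] n0 = b1 [^] n0 \<otimes> sn [^] r\<close> using b1c snc by (simp add: m_assoc)
      then have "b1 \<in> B t r" unfolding B_def using b1H by blast
      then show "x \<in> (\<lambda>(b, r). b \<otimes> s [^] r) ` (\<Union>t\<in>?T. \<Union>r\<in>{0..<n0}. B t r \<times> {r})"
        using tT r xb1 by force
    qed
    moreover have "finite (\<Union>t\<in>?T. \<Union>r\<in>{0..<n0}. B t r \<times> {r})"
      using tor Bfin Tc by (intro finite_UN_I) auto
    ultimately show "finite (tors G (generate G (insert s S)))" using finite_subset by blast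
  qed
  then show ?thesis by blast
qed

lemma (in comm_group) fg_struct:
  assumes "finite S" "S \<subseteq> carrier G"
  shows "\<exists>N m \<psi> w. fgdata G (generate G S) N m \<psi> w"
  using assms
proof (induct S rule: finite_induct)
  case empty
  have "fgdata G (generate G {}) 1 0 (\<lambda>_ _. 0) (\<lambda>_. \<one>)"
    unfolding fgdata_def generate_empty tors_def by auto
  then show ?case by blast
next
  case (insert s S)
  then have S: "S \<subseteq> carrier G" and s: "s \<in> carrier G" by auto
  from insert obtain N m \<psi> w where D: "fgdata G (generate G S) N m \<psi> w" by blast
  show ?case
  proof (cases "\<forall>j::int. s [^] j \<in> generate G S \<longrightarrow> j = 0")
    case True then show ?thesis using fg_case1[OF S s True D] by blast
  next
    case False
    then obtain j0::int where "s [^] j0 \<in> generate G S" "j0 \<noteq> 0" by blast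
    then show ?thesis using fg_case2[OF S s _ _ D] by blast
  qed
qed


locale ctx = A: comm_group A + G: group G
  for A :: "('b, 'n) monoid_scheme" (structure) and G :: "('a, 'm) monoid_scheme" +
  fixes act :: "'a \<Rightarrow> 'b \<Rightarrow> 'b" and \<sigma> :: "'a \<Rightarrow> 'a \<Rightarrow> 'b"
  assumes act_hom: "g \<in> carrier G \<Longrightarrow> act g \<in> hom A A"
    and act_one: "a \<in> carrier A \<Longrightarrow> act \<one>\<^bsub>G\<^esub> a = a"
    and act_mult: "g \<in> carrier G \<Longrightarrow> h \<in> carrier G \<Longrightarrow> a \<in> carrier A \<Longrightarrow>
        act (g \<otimes>\<^bsub>G\<^esub> h) a = act h (act g a)"
    and fin_img: "finite ((\<lambda>g. restrict (act g) (carrier A)) ` carrier G)"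
    and sig_closed: "g \<in> carrier G \<Longrightarrow> h \<in> carrier G \<Longrightarrow> \<sigma> g h \<in> carrier A"
    and cocycle: "g \<in> carrier G \<Longrightarrow> h1 \<in> carrier G \<Longrightarrow> h2 \<in> carrier G \<Longrightarrow>
        \<sigma> g (h1 \<otimes>\<^bsub>G\<^esub> h2) = act h2 (\<sigma> g h1) \<otimes> \<sigma> (g \<otimes>\<^bsub>G\<^esub> h1) h2 \<otimes> inv (\<sigma> h1 h2)"
begin

lemma act_ghom: "g \<in> carrier G \<Longrightarrow> group_hom A A (act g)"
  by (simp add: group_hom_def group_hom_axioms_def act_hom A.is_group)

lemma act_closed [simp]: "g \<in> carrier G \<Longrightarrow> a \<in> carrier A \<Longrightarrow> act g a \<in> carrier A"
  using act_hom by (auto simp: hom_def)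

lemma act_m [simp]: "g \<in> carrier G \<Longrightarrow> a \<in> carrier A \<Longrightarrow> b \<in> carrier A \<Longrightarrow> act g (a \<otimes> b) = act g a \<otimes> act g b"
  using act_hom by (auto simp: hom_def)

lemma act_inv [simp]: "g \<in> carrier G \<Longrightarrow> a \<in> carrier A \<Longrightarrow> act g (inv a) = inv (act g a)"
  using group_hom.hom_inv[OF act_ghom] by simp

lemma act_1 [simp]: "g \<in> carrier G \<Longrightarrow> act g \<one> = \<one>"
  using group_hom.hom_one[OF act_ghom] by simp

lemma act_pow [simp]: "g \<in> carrier G \<Longrightarrow> a \<in> carrier A \<Longrightarrow> act g (a [^] (k::int)) = (act g a) [^] k"
  using group_hom.hom_int_pow[OF act_ghom] by simp

lemma act_invG1: "g \<in> carrier G \<Longrightarrow> a \<in> carrier A \<Longrightarrow> act (inv\<^bsub>G\<^esub> g) (act g a) = a"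
  using act_mult[of g "inv\<^bsub>G\<^esub> g" a] act_one by simp

lemma act_invG2: "g \<in> carrier G \<Longrightarrow> a \<in> carrier A \<Longrightarrow> act g (act (inv\<^bsub>G\<^esub> g) a) = a"
  using act_mult[of "inv\<^bsub>G\<^esub> g" g a] act_one by simp

lemma sig_1h: "h \<in> carrier G \<Longrightarrow> \<sigma> \<one>\<^bsub>G\<^esub> h = act h (\<sigma> \<one>\<^bsub>G\<^esub> \<one>\<^bsub>G\<^esub>)"
proof -
  assume h: "h \<in> carrier G"
  have "\<sigma> \<one>\<^bsub>G\<^esub> (\<one>\<^bsub>G\<^esub> \<otimes>\<^bsub>G\<^esub> h) = act h (\<sigma> \<one>\<^bsub>G\<^esub> \<one>\<^bsub>G\<^esub>) \<otimes> \<sigma> (\<one>\<^bsub>G\<^esub> \<otimes>\<^bsub>G\<^esub> \<one>\<^bsub>G\<^esub>) h \<otimes> inv (\<sigma> \<one>\<^bsub>G\<^esub> h)"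
    using cocycle[of "\<one>\<^bsub>G\<^esub>" "\<one>\<^bsub>G\<^esub>" h] h by simp
  then show ?thesis using h sig_closed by (simp add: A.m_assoc)
qed

lemma sig_g1: "g \<in> carrier G \<Longrightarrow> \<sigma> g \<one>\<^bsub>G\<^esub> = \<sigma> \<one>\<^bsub>G\<^esub> \<one>\<^bsub>G\<^esub>"
proof -
  assume g: "g \<in> carrier G"
  have c: "\<sigma> g \<one>\<^bsub>G\<^esub> \<in> carrier A" "\<sigma> \<one>\<^bsub>G\<^esub> \<one>\<^bsub>G\<^esub> \<in> carrier A" using g sig_closed by auto
  have "\<sigma> g (\<one>\<^bsub>G\<^esub> \<otimes>\<^bsub>G\<^esub> \<one>\<^bsub>G\<^esub>) = act \<one>\<^bsub>G\<^esub> (\<sigma> g \<one>\<^bsub>G\<^esub>) \<otimes> \<sigma> (g \<otimes>\<^bsub>G\<^esub> \<one>\<^bsub>G\<^esub>) \<one>\<^bsub>G\<^esub> \<otimes> inv (\<sigma> \<one>\<^bsub>G\<^esub> \<one>\<^bsub>G\<^esub>)"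
    using cocycle[of g "\<one>\<^bsub>G\<^esub>" "\<one>\<^bsub>G\<^esub>"] g by simp
  then have "\<sigma> g \<one>\<^bsub>G\<^esub> = \<sigma> g \<one>\<^bsub>G\<^esub> \<otimes> (\<sigma> g \<one>\<^bsub>G\<^esub> \<otimes> inv (\<sigma> \<one>\<^bsub>G\<^esub> \<one>\<^bsub>G\<^esub>))"
    using g c act_one by (simp add: A.m_assoc)
  then have "\<sigma> g \<one>\<^bsub>G\<^esub> \<otimes> inv (\<sigma> \<one>\<^bsub>G\<^esub> \<one>\<^bsub>G\<^esub>) = \<one>" using c by simp
  then show ?thesis using c by (metis A.inv_equality A.inv_inv A.m_comm A.inv_closed)
qed

lemma cocycle': "g \<in> carrier G \<Longrightarrow> h1 \<in> carrier G \<Longrightarrow> h2 \<in> carrier G \<Longrightarrow>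
    \<sigma> g (h1 \<otimes>\<^bsub>G\<^esub> h2) \<otimes> \<sigma> h1 h2 = act h2 (\<sigma> g h1) \<otimes> \<sigma> (g \<otimes>\<^bsub>G\<^esub> h1) h2"
  using cocycle[of g h1 h2] sig_closed by (simp add: A.m_assoc)

definition EE :: "('b \<times> 'a) monoid" where
  "EE = \<lparr>carrier = carrier A \<times> carrier G,
         monoid.mult = (\<lambda>x y. (act (snd y) (fst x) \<otimes> fst y \<otimes> \<sigma> (snd x) (snd y), snd x \<otimes>\<^bsub>G\<^esub> snd y)),
         one = (inv (\<sigma> \<one>\<^bsub>G\<^esub> \<one>\<^bsub>G\<^esub>), \<one>\<^bsub>G\<^esub>)\<rparr>"

lemma EE_carrier [simp]: "carrier EE = carrier A \<times> carrier G" by (simp add: EE_def)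
lemma EE_mult [simp]: "(a, g) \<otimes>\<^bsub>EE\<^esub> (b, h) = (act h a \<otimes> b \<otimes> \<sigma> g h, g \<otimes>\<^bsub>G\<^esub> h)" by (simp add: EE_def)
lemma EE_one [simp]: "\<one>\<^bsub>EE\<^esub> = (inv (\<sigma> \<one>\<^bsub>G\<^esub> \<one>\<^bsub>G\<^esub>), \<one>\<^bsub>G\<^esub>)" by (simp add: EE_def)

lemma EE_group: "group EE"
proof (rule groupI)
  fix x y assume "x \<in> carrier EE" "y \<in> carrier EE"
  then show "x \<otimes>\<^bsub>EE\<^esub> y \<in> carrier EE" using sig_closed by (cases x, cases y) auto
next
  show "\<one>\<^bsub>EE\<^esub> \<in> carrier EE" using sig_closed by simp
next
  fix x y z assume x: "x \<in> carrier EE" and y: "y \<in> carrier EE" and z: "z \<in> carrier EE"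
  obtain a g where xa: "x = (a, g)" and a: "a \<in> carrier A" and g: "g \<in> carrier G" using x by auto
  obtain b h where yb: "y = (b, h)" and b: "b \<in> carrier A" and h: "h \<in> carrier G" using y by auto
  obtain c k where zc: "z = (c, k)" and c: "c \<in> carrier A" and k: "k \<in> carrier G" using z by auto
  have s: "\<sigma> g h \<in> carrier A" "\<sigma> (g \<otimes>\<^bsub>G\<^esub> h) k \<in> carrier A" "\<sigma> h k \<in> carrier A"
      "\<sigma> g (h \<otimes>\<^bsub>G\<^esub> k) \<in> carrier A" using sig_closed g h k by auto
  have ah: "act h a \<in> carrier A" "act k (act h a) \<in> carrier A" "act k b \<in> carrier A" "act k (\<sigma> g h) \<in> carrier A"
    using a b h k s by auto
  have "act k (act h a \<otimes> b \<otimes> \<sigma> g h) \<otimes> c \<otimes> \<sigma> (g \<otimes>\<^bsub>G\<^esub> h) k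
      = act k (act h a) \<otimes> act k b \<otimes> c \<otimes> (act k (\<sigma> g h) \<otimes> \<sigma> (g \<otimes>\<^bsub>G\<^esub> h) k)"
    using a b c h k s ah by (simp add: A.m_ac)
  also have "act k (\<sigma> g h) \<otimes> \<sigma> (g \<otimes>\<^bsub>G\<^esub> h) k = \<sigma> g (h \<otimes>\<^bsub>G\<^esub> k) \<otimes> \<sigma> h k"
    using cocycle'[OF g h k] by simp
  also have "act k (act h a) \<otimes> act k b \<otimes> c \<otimes> (\<sigma> g (h \<otimes>\<^bsub>G\<^esub> k) \<otimes> \<sigma> h k)
      = act (h \<otimes>\<^bsub>G\<^esub> k) a \<otimes> (act k b \<otimes> c \<otimes> \<sigma> h k) \<otimes> \<sigma> g (h \<otimes>\<^bsub>G\<^esub> k)"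
    using a b c h k s ah act_mult[OF h k a] by (simp add: A.m_ac)
  finally show "x \<otimes>\<^bsub>EE\<^esub> y \<otimes>\<^bsub>EE\<^esub> z = x \<otimes>\<^bsub>EE\<^esub> (y \<otimes>\<^bsub>EE\<^esub> z)"
    unfolding xa yb zc using g h k by (simp add: G.m_assoc)
next
  fix x assume x: "x \<in> carrier EE"
  obtain b h where xb: "x = (b, h)" and b: "b \<in> carrier A" and h: "h \<in> carrier G" using x by auto
  have s: "\<sigma> \<one>\<^bsub>G\<^esub> \<one>\<^bsub>G\<^esub> \<in> carrier A" using sig_closed by simp
  have "act h (inv (\<sigma> \<one>\<^bsub>G\<^esub> \<one>\<^bsub>G\<^esub>)) \<otimes> b \<otimes> \<sigma> \<one>\<^bsub>G\<^esub> h
      = b \<otimes> (inv (act h (\<sigma> \<one>\<^bsub>G\<^esub> \<one>\<^bsub>G\<^esub>)) \<otimes> act h (\<sigma> \<one>\<^bsub>G\<^esub> \<one>\<^bsub>G\<^esub>))"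
    using sig_1h[OF h] s h b by (simp add: A.m_ac)
  also have "\<dots> = b" using s h b by simp
  finally show "\<one>\<^bsub>EE\<^esub> \<otimes>\<^bsub>EE\<^esub> x = x" unfolding xb using h by simp
next
  fix x assume x: "x \<in> carrier EE"
  obtain a g where xa: "x = (a, g)" and a: "a \<in> carrier A" and g: "g \<in> carrier G" using x by auto
  define Z where "Z = inv (\<sigma> \<one>\<^bsub>G\<^esub> \<one>\<^bsub>G\<^esub>) \<otimes> inv a \<otimes> inv (\<sigma> (inv\<^bsub>G\<^esub> g) g)"
  have gi: "inv\<^bsub>G\<^esub> g \<in> carrier G" using g by simp
  have Zc: "Z \<in> carrier A" unfolding Z_def using a g gi sig_closed by simp
  have s: "\<sigma> (inv\<^bsub>G\<^esub> g) g \<in> carrier A" "\<sigma> \<one>\<^bsub>G\<^esub> \<one>\<^bsub>G\<^esub> \<in> carrier A" using sig_closed g gi by auto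
  have "(act (inv\<^bsub>G\<^esub> g) Z, inv\<^bsub>G\<^esub> g) \<otimes>\<^bsub>EE\<^esub> x = (Z \<otimes> a \<otimes> \<sigma> (inv\<^bsub>G\<^esub> g) g, \<one>\<^bsub>G\<^esub>)"
    unfolding xa using act_invG2[OF g Zc] g by simp
  also have "Z \<otimes> a \<otimes> \<sigma> (inv\<^bsub>G\<^esub> g) g = inv (\<sigma> \<one>\<^bsub>G\<^esub> \<one>\<^bsub>G\<^esub>) \<otimes> (inv a \<otimes> a) \<otimes> (inv (\<sigma> (inv\<^bsub>G\<^esub> g) g) \<otimes> \<sigma> (inv\<^bsub>G\<^esub> g) g)"
    unfolding Z_def using a s by (simp add: A.m_ac del: A.l_inv A.r_inv A.Units_l_inv A.Units_r_inv)
  also have "\<dots> = inv (\<sigma> \<one>\<^bsub>G\<^esub> \<one>\<^bsub>G\<^esub>)" using a s by simp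
  finally have "(act (inv\<^bsub>G\<^esub> g) Z, inv\<^bsub>G\<^esub> g) \<otimes>\<^bsub>EE\<^esub> x = \<one>\<^bsub>EE\<^esub>" by simp
  moreover have "(act (inv\<^bsub>G\<^esub> g) Z, inv\<^bsub>G\<^esub> g) \<in> carrier EE" using gi Zc by simp
  ultimately show "\<exists>y\<in>carrier EE. y \<otimes>\<^bsub>EE\<^esub> x = \<one>\<^bsub>EE\<^esub>" by blast
qed

end


locale ctx2 = ctx +
  fixes SA SG
  assumes SA: "finite SA" "SA \<subseteq> carrier A" "generate A SA = carrier A"
    and SG: "finite SG" "SG \<subseteq> carrier G" "generate G SG = carrier G"
begin

declare EE_carrier [simp del] EE_mult [simp del] EE_one [simp del]

lemma EEm: "monoid EE" using group.is_monoid[OF EE_group] .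

definition wprod where
  "wprod ws = foldr (\<lambda>x y. x \<otimes>\<^bsub>EE\<^esub> y) ws \<one>\<^bsub>EE\<^esub>"

definition iota where
  "iota a = (a \<otimes> inv (\<sigma> \<one>\<^bsub>G\<^esub> \<one>\<^bsub>G\<^esub>), \<one>\<^bsub>G\<^esub>)"

definition Sig0 where
  "Sig0 = iota ` SA \<union> (\<lambda>g. (\<one>, g)) ` SG"

definition Sig where
  "Sig = Sig0 \<union> (\<lambda>x. inv\<^bsub>EE\<^esub> x) ` Sig0"

lemma E: "group EE" by (rule EE_group)

lemma s11: "\<sigma> \<one>\<^bsub>G\<^esub> \<one>\<^bsub>G\<^esub> \<in> carrier A" using sig_closed by simp

lemma Sig0_carrier: "Sig0 \<subseteq> carrier EE"
  using SA SG s11 unfolding Sig0_def iota_def EE_carrier by auto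

lemma Sig_carrier: "Sig \<subseteq> carrier EE"
  using Sig0_carrier group.inv_closed[OF E] unfolding Sig_def by auto

lemma Sig_finite: "finite Sig"
  using SA SG unfolding Sig_def Sig0_def by simp

lemma wprod_closed: "set ws \<subseteq> carrier EE \<Longrightarrow> wprod ws \<in> carrier EE"
  by (induct ws) (auto simp: wprod_def monoid.m_closed[OF EEm] monoid.one_closed[OF EEm])

lemma wprod_append: "set xs \<subseteq> carrier EE \<Longrightarrow> set ys \<subseteq> carrier EE \<Longrightarrow>
    wprod (xs @ ys) = wprod xs \<otimes>\<^bsub>EE\<^esub> wprod ys"
proof (induct xs)
  case Nil then show ?case using wprod_closed[of ys] by (simp add: wprod_def monoid.l_one[OF EEm])
next
  case (Cons x xs)
  then have "wprod (xs @ ys) = wprod xs \<otimes>\<^bsub>EE\<^esub> wprod ys" by simp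
  then show ?case using Cons.prems wprod_closed[of xs] wprod_closed[of ys]
    by (simp add: wprod_def monoid.m_assoc[OF EEm])
qed

lemma iota_hom: "iota \<in> hom A EE"
proof (rule homI)
  fix a assume "a \<in> carrier A" then show "iota a \<in> carrier EE" using s11 unfolding iota_def EE_carrier by simp
next
  fix a b assume a: "a \<in> carrier A" and b: "b \<in> carrier A"
  have "act \<one>\<^bsub>G\<^esub> (a \<otimes> inv (\<sigma> \<one>\<^bsub>G\<^esub> \<one>\<^bsub>G\<^esub>)) \<otimes> (b \<otimes> inv (\<sigma> \<one>\<^bsub>G\<^esub> \<one>\<^bsub>G\<^esub>)) \<otimes> \<sigma> \<one>\<^bsub>G\<^esub> \<one>\<^bsub>G\<^esub>
      = (a \<otimes> b \<otimes> inv (\<sigma> \<one>\<^bsub>G\<^esub> \<one>\<^bsub>G\<^esub>)) \<otimes> (inv (\<sigma> \<one>\<^bsub>G\<^esub> \<one>\<^bsub>G\<^esub>) \<otimes> \<sigma> \<one>\<^bsub>G\<^esub> \<one>\<^bsub>G\<^esub>)"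
    using a b s11 act_one by (simp add: A.m_ac del: A.l_inv A.r_inv A.Units_l_inv A.Units_r_inv)
  also have "\<dots> = a \<otimes> b \<otimes> inv (\<sigma> \<one>\<^bsub>G\<^esub> \<one>\<^bsub>G\<^esub>)" using a b s11 by simp
  finally show "iota (a \<otimes> b) = iota a \<otimes>\<^bsub>EE\<^esub> iota b" unfolding iota_def EE_mult by simp
qed

lemma iota_ghom: "group_hom A EE iota"
  by (simp add: group_hom_def group_hom_axioms_def iota_hom A.is_group E)

lemma snd_hom: "snd \<in> hom EE G"
  by (rule homI) (auto simp: EE_carrier EE_mult)

lemma snd_ghom: "group_hom EE G snd"
  by (simp add: group_hom_def group_hom_axioms_def snd_hom G.is_group E)

lemma gen_all: "generate EE Sig0 = carrier EE"
proof
  show "generate EE Sig0 \<subseteq> carrier EE" using group.generate_incl[OF E Sig0_carrier] .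
next
  let ?H = "generate EE Sig0"
  have sub: "subgroup ?H EE" using group.generate_is_subgroup[OF E Sig0_carrier] .
  have iA: "iota a \<in> ?H" if "a \<in> generate A SA" for a
    using that
  proof (induct rule: generate.induct)
    case one
    have "iota \<one> = \<one>\<^bsub>EE\<^esub>" using group_hom.hom_one[OF iota_ghom] .
    then show ?case using subgroup.one_closed[OF sub] by simp
  next
    case (incl h)
    then have "iota h \<in> Sig0" unfolding Sig0_def by blast
    then show ?case using generate.incl[of "iota h" Sig0 EE] by simp
  next
    case (inv h)
    then have hc: "h \<in> carrier A" using SA by auto
    have "iota h \<in> Sig0" using inv unfolding Sig0_def by blast
    then have "iota h \<in> ?H" using generate.incl[of "iota h" Sig0 EE] by simp
    then have "inv\<^bsub>EE\<^esub> (iota h) \<in> ?H" by (rule subgroup.m_inv_closed[OF sub])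
    then show ?case using group_hom.hom_inv[OF iota_ghom hc] by simp
  next
    case (eng h1 h2)
    have c: "h1 \<in> carrier A" "h2 \<in> carrier A"
      using eng.hyps(1,3) A.generate_incl[OF SA(2)] by auto
    have "iota (h1 \<otimes> h2) = iota h1 \<otimes>\<^bsub>EE\<^esub> iota h2" using iota_hom c by (simp add: hom_mult)
    then show ?case using subgroup.m_closed[OF sub eng.hyps(2) eng.hyps(4)] by simp
  qed
  have gG: "\<exists>a. (a, g) \<in> ?H" if "g \<in> generate G SG" for g
    using that
  proof (induct rule: generate.induct)
    case one
    then show ?case using subgroup.one_closed[OF sub] unfolding EE_one by blast
  next
    case (incl h)
    then have "(\<one>, h) \<in> Sig0" unfolding Sig0_def by blast
    then show ?case using generate.incl[of "(\<one>, h)" Sig0 EE] by blast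
  next
    case (inv h)
    have hc: "h \<in> carrier G" using inv SG by auto
    have "(\<one>, h) \<in> Sig0" using inv unfolding Sig0_def by blast
    then have "(\<one>, h) \<in> ?H" using generate.incl[of "(\<one>, h)" Sig0 EE] by simp
    then have i: "inv\<^bsub>EE\<^esub> (\<one>, h) \<in> ?H" by (rule subgroup.m_inv_closed[OF sub])
    have "(\<one>, h) \<in> carrier EE" unfolding EE_carrier using hc by simp
    then have "snd (inv\<^bsub>EE\<^esub> (\<one>, h)) = inv\<^bsub>G\<^esub> h"
      using group_hom.hom_inv[OF snd_ghom, of "(\<one>, h)"] by simp
    then show ?case using i by (metis prod.collapse)
  next
    case (eng h1 h2)
    then obtain a1 a2 where "(a1, h1) \<in> ?H" "(a2, h2) \<in> ?H" by blast
    then have "(a1, h1) \<otimes>\<^bsub>EE\<^esub> (a2, h2) \<in> ?H" using subgroup.m_closed[OF sub] by blast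
    then show ?case unfolding EE_mult by auto
  qed
  show "carrier EE \<subseteq> ?H"
  proof
    fix x assume x: "x \<in> carrier EE"
    then obtain a g where xa: "x = (a, g)" and a: "a \<in> carrier A" and g: "g \<in> carrier G" unfolding EE_carrier by auto
    obtain c where cg: "(c, g) \<in> ?H" using gG g SG(3) by blast
    have cc: "c \<in> carrier A" using cg subgroup.mem_carrier[OF sub cg] unfolding EE_carrier by simp
    have y: "inv c \<otimes> a \<in> carrier A" using cc a by simp
    have "iota (inv c \<otimes> a) \<in> ?H" using iA y SA(3) by simp
    then have P: "(c, g) \<otimes>\<^bsub>EE\<^esub> iota (inv c \<otimes> a) \<in> ?H" using subgroup.m_closed[OF sub cg] by blast
    have "act \<one>\<^bsub>G\<^esub> c \<otimes> (inv c \<otimes> a \<otimes> inv (\<sigma> \<one>\<^bsub>G\<^esub> \<one>\<^bsub>G\<^esub>)) \<otimes> \<sigma> g \<one>\<^bsub>G\<^esub>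
        = a \<otimes> (c \<otimes> inv c) \<otimes> (inv (\<sigma> \<one>\<^bsub>G\<^esub> \<one>\<^bsub>G\<^esub>) \<otimes> \<sigma> \<one>\<^bsub>G\<^esub> \<one>\<^bsub>G\<^esub>)"
      using a cc s11 act_one sig_g1[OF g] by (simp add: A.m_ac del: A.l_inv A.r_inv A.Units_l_inv A.Units_r_inv)
    also have "\<dots> = a" using a cc s11 by simp
    finally have "(c, g) \<otimes>\<^bsub>EE\<^esub> iota (inv c \<otimes> a) = x" unfolding iota_def xa EE_mult using g by simp
    then show "x \<in> ?H" using P by simp
  qed
qed

lemma gen_words: "x \<in> generate EE Sig0 \<Longrightarrow> \<exists>ws. set ws \<subseteq> Sig \<and> wprod ws = x"
proof (induct rule: generate.induct)
  case one then show ?case by (intro exI[of _ "[]"]) (simp add: wprod_def)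
next
  case (incl h)
  then have "h \<in> carrier EE" using Sig0_carrier by auto
  then show ?case using incl by (intro exI[of _ "[h]"]) (auto simp: wprod_def Sig_def monoid.r_one[OF EEm])
next
  case (inv h)
  then have "h \<in> carrier EE" using Sig0_carrier by blast
  then have "inv\<^bsub>EE\<^esub> h \<in> carrier EE" by (rule group.inv_closed[OF E])
  then show ?case using inv by (intro exI[of _ "[inv\<^bsub>EE\<^esub> h]"]) (auto simp: wprod_def Sig_def monoid.r_one[OF EEm])
next
  case (eng h1 h2)
  then obtain ws1 ws2 where "set ws1 \<subseteq> Sig" "wprod ws1 = h1" "set ws2 \<subseteq> Sig" "wprod ws2 = h2" by blast
  then show ?case using wprod_append[of ws1 ws2] Sig_carrier by (intro exI[of _ "ws1 @ ws2"]) auto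
qed

definition len where
  "len e = (LEAST n. \<exists>ws. set ws \<subseteq> Sig \<and> length ws = n \<and> wprod ws = e)"

lemma len_ex: "e \<in> carrier EE \<Longrightarrow> \<exists>ws. set ws \<subseteq> Sig \<and> length ws = len e \<and> wprod ws = e"
proof -
  assume "e \<in> carrier EE"
  then obtain ws where "set ws \<subseteq> Sig" "wprod ws = e" using gen_words gen_all by blast
  then have "\<exists>n. \<exists>ws. set ws \<subseteq> Sig \<and> length ws = n \<and> wprod ws = e" by blast
  then show ?thesis unfolding len_def by (rule LeastI_ex)
qed

lemma len_le: "set ws \<subseteq> Sig \<Longrightarrow> len (wprod ws) \<le> length ws"
  unfolding len_def by (rule Least_le) blast

lemma len_mult: "x \<in> carrier EE \<Longrightarrow> y \<in> carrier EE \<Longrightarrow> len (x \<otimes>\<^bsub>EE\<^esub> y) \<le> len x + len y"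
proof -
  assume x: "x \<in> carrier EE" and y: "y \<in> carrier EE"
  obtain wx where wx: "set wx \<subseteq> Sig" "length wx = len x" "wprod wx = x" using len_ex[OF x] by blast
  obtain wy where wy: "set wy \<subseteq> Sig" "length wy = len y" "wprod wy = y" using len_ex[OF y] by blast
  have "wprod (wx @ wy) = x \<otimes>\<^bsub>EE\<^esub> y" using wprod_append[of wx wy] wx wy Sig_carrier by auto
  then have "len (x \<otimes>\<^bsub>EE\<^esub> y) \<le> length (wx @ wy)" using len_le[of "wx @ wy"] wx wy by auto
  then show ?thesis using wx wy by simp
qed

lemma len_left: "x \<in> carrier EE \<Longrightarrow> y \<in> carrier EE \<Longrightarrow> len y \<le> len (inv\<^bsub>EE\<^esub> x) + len (x \<otimes>\<^bsub>EE\<^esub> y)"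
proof -
  assume x: "x \<in> carrier EE" and y: "y \<in> carrier EE"
  have "y = inv\<^bsub>EE\<^esub> x \<otimes>\<^bsub>EE\<^esub> (x \<otimes>\<^bsub>EE\<^esub> y)" using x y by (simp add: monoid.m_assoc[OF EEm, symmetric] group.l_inv[OF E] monoid.l_one[OF EEm] group.inv_closed[OF E])
  then show ?thesis using len_mult[of "inv\<^bsub>EE\<^esub> x" "x \<otimes>\<^bsub>EE\<^esub> y"] x y group.inv_closed[OF E]
    monoid.m_closed[OF group.is_monoid[OF E]] by metis
qed

lemma len_right: "x \<in> carrier EE \<Longrightarrow> y \<in> carrier EE \<Longrightarrow> len x \<le> len (x \<otimes>\<^bsub>EE\<^esub> y) + len (inv\<^bsub>EE\<^esub> y)"
proof -
  assume x: "x \<in> carrier EE" and y: "y \<in> carrier EE"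
  have "x = (x \<otimes>\<^bsub>EE\<^esub> y) \<otimes>\<^bsub>EE\<^esub> inv\<^bsub>EE\<^esub> y" using x y by (simp add: monoid.m_assoc[OF EEm] group.r_inv[OF E] monoid.r_one[OF EEm] group.inv_closed[OF E])
  then show ?thesis using len_mult[of "x \<otimes>\<^bsub>EE\<^esub> y" "inv\<^bsub>EE\<^esub> y"] x y group.inv_closed[OF E]
    monoid.m_closed[OF group.is_monoid[OF E]] by metis
qed

end


locale ctx3 = ctx2 +
  fixes N m \<psi> w
  assumes FG: "fgdata A (carrier A) N m \<psi> w"
begin

lemma N_pos: "N > 0" using FG unfolding fgdata_def by simp
lemma psi_hom: "j < m \<Longrightarrow> x \<in> carrier A \<Longrightarrow> y \<in> carrier A \<Longrightarrow> \<psi> j (x \<otimes> y) = \<psi> j x + \<psi> j y"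
  using FG unfolding fgdata_def by blast
lemma w_closed: "j < m \<Longrightarrow> w j \<in> carrier A" using FG unfolding fgdata_def by blast
lemma w_prod: "a \<in> carrier A \<Longrightarrow> finprod A (\<lambda>j. w j [^] (\<psi> j a)) {..<m} = a [^] N"
  using FG unfolding fgdata_def by blast
lemma tors_fin: "finite (tors A (carrier A))" using FG unfolding fgdata_def by blast

lemma psi_one: "j < m \<Longrightarrow> \<psi> j \<one> = 0"
  using A.hom_on_sub_one[of "carrier A" "\<psi> j"] psi_hom A.subgroup_self by blast

lemma psi_inv: "j < m \<Longrightarrow> x \<in> carrier A \<Longrightarrow> \<psi> j (inv x) = - \<psi> j x"
proof -
  assume j: "j < m" and x: "x \<in> carrier A"
  have "\<psi> j (x \<otimes> inv x) = \<psi> j x + \<psi> j (inv x)" by (rule psi_hom[OF j x]) (use x in simp)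
  moreover have "x \<otimes> inv x = \<one>" using x by simp
  ultimately show ?thesis using psi_one[OF j] by simp
qed

lemma psi_pow: "j < m \<Longrightarrow> x \<in> carrier A \<Longrightarrow> \<psi> j (x [^] (k::int)) = k * \<psi> j x"
  using A.hom_on_sub_pow[of "carrier A" "\<psi> j" x k] psi_hom A.subgroup_self by blast

definition Gam where "Gam = (\<lambda>g. restrict (act g) (carrier A)) ` carrier G"

lemma Gam_fin: "finite Gam" using fin_img unfolding Gam_def .

definition Tr where "Tr h \<gamma> = restrict (\<lambda>a. \<gamma> (act h a)) (carrier A)"

lemma Gam_E: "\<gamma> \<in> Gam \<Longrightarrow> \<exists>r\<in>carrier G. \<gamma> = restrict (act r) (carrier A)"
  unfolding Gam_def by blast

lemma Gam_app: "\<gamma> \<in> Gam \<Longrightarrow> a \<in> carrier A \<Longrightarrow> \<gamma> a \<in> carrier A"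
  using Gam_E by fastforce

lemma Gam_m: "\<gamma> \<in> Gam \<Longrightarrow> a \<in> carrier A \<Longrightarrow> b \<in> carrier A \<Longrightarrow> \<gamma> (a \<otimes> b) = \<gamma> a \<otimes> \<gamma> b"
  using Gam_E by fastforce

lemma Gam_inv: "\<gamma> \<in> Gam \<Longrightarrow> a \<in> carrier A \<Longrightarrow> \<gamma> (inv a) = inv (\<gamma> a)"
  using Gam_E by fastforce

lemma Tr_Gam: "h \<in> carrier G \<Longrightarrow> \<gamma> \<in> Gam \<Longrightarrow> Tr h \<gamma> \<in> Gam"
proof -
  assume h: "h \<in> carrier G" and g: "\<gamma> \<in> Gam"
  then obtain r where r: "r \<in> carrier G" and gr: "\<gamma> = restrict (act r) (carrier A)" using Gam_E by blast
  have "Tr h \<gamma> = restrict (act (h \<otimes>\<^bsub>G\<^esub> r)) (carrier A)"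
    unfolding Tr_def gr using act_mult[OF h r] h by (auto simp: fun_eq_iff)
  then show ?thesis unfolding Gam_def using h r by blast
qed

lemma Tr_app: "a \<in> carrier A \<Longrightarrow> Tr h \<gamma> a = \<gamma> (act h a)"
  unfolding Tr_def by simp

lemma Tr_inj: "h \<in> carrier G \<Longrightarrow> inj_on (Tr h) Gam"
proof (rule inj_onI)
  fix \<gamma>1 \<gamma>2 assume h: "h \<in> carrier G" and g1: "\<gamma>1 \<in> Gam" and g2: "\<gamma>2 \<in> Gam" and eq: "Tr h \<gamma>1 = Tr h \<gamma>2"
  obtain r1 where r1: "\<gamma>1 = restrict (act r1) (carrier A)" using Gam_E[OF g1] by blast
  obtain r2 where r2: "\<gamma>2 = restrict (act r2) (carrier A)" using Gam_E[OF g2] by blast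
  show "\<gamma>1 = \<gamma>2"
  proof
    fix b show "\<gamma>1 b = \<gamma>2 b"
    proof (cases "b \<in> carrier A")
      case True
      let ?c = "act (inv\<^bsub>G\<^esub> h) b"
      have c: "?c \<in> carrier A" using h True by simp
      have "Tr h \<gamma>1 ?c = Tr h \<gamma>2 ?c" using eq by simp
      then show ?thesis using c act_invG2[OF h True] unfolding Tr_app[OF c] by simp
    next
      case False then show ?thesis using r1 r2 by simp
    qed
  qed
qed

lemma Tr_image: "h \<in> carrier G \<Longrightarrow> Tr h ` Gam = Gam"
  using endo_inj_surj[OF Gam_fin _ Tr_inj] Tr_Gam by blast

definition nu where "nu a = (\<Sum>\<gamma>\<in>Gam. \<Sum>j<m. \<bar>\<psi> j (\<gamma> a)\<bar>)"

lemma nu_nonneg: "nu a \<ge> 0" unfolding nu_def by (intro sum_nonneg) auto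

lemma psi_le_nu: "\<gamma> \<in> Gam \<Longrightarrow> j < m \<Longrightarrow> \<bar>\<psi> j (\<gamma> a)\<bar> \<le> nu a"
proof -
  assume g: "\<gamma> \<in> Gam" and j: "j < m"
  have h1: "\<bar>\<psi> j (\<gamma> a)\<bar> \<le> (\<Sum>j<m. \<bar>\<psi> j (\<gamma> a)\<bar>)"
    by (rule member_le_sum[where f="\<lambda>j. \<bar>\<psi> j (\<gamma> a)\<bar>"]) (use j in auto)
  have h2: "(\<Sum>j<m. \<bar>\<psi> j (\<gamma> a)\<bar>) \<le> nu a" unfolding nu_def
    by (rule member_le_sum[where f="\<lambda>\<gamma>. \<Sum>j<m. \<bar>\<psi> j (\<gamma> a)\<bar>"]) (use g Gam_fin in \<open>auto intro: sum_nonneg\<close>)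
  show ?thesis using order_trans[OF h1 h2] .
qed

lemma nu_m: "a \<in> carrier A \<Longrightarrow> b \<in> carrier A \<Longrightarrow> nu (a \<otimes> b) \<le> nu a + nu b"
proof -
  assume a: "a \<in> carrier A" and b: "b \<in> carrier A"
  have "nu (a \<otimes> b) = (\<Sum>\<gamma>\<in>Gam. \<Sum>j<m. \<bar>\<psi> j (\<gamma> a) + \<psi> j (\<gamma> b)\<bar>)"
    unfolding nu_def using a b by (intro sum.cong refl) (simp add: Gam_m Gam_app psi_hom)
  also have "\<dots> \<le> (\<Sum>\<gamma>\<in>Gam. \<Sum>j<m. \<bar>\<psi> j (\<gamma> a)\<bar> + \<bar>\<psi> j (\<gamma> b)\<bar>)"
    by (intro sum_mono) (auto intro: abs_triangle_ineq)
  also have "\<dots> = nu a + nu b" unfolding nu_def by (simp add: sum.distrib)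
  finally show ?thesis .
qed

lemma nu_act: "h \<in> carrier G \<Longrightarrow> a \<in> carrier A \<Longrightarrow> nu (act h a) = nu a"
proof -
  assume h: "h \<in> carrier G" and a: "a \<in> carrier A"
  let ?F = "\<lambda>\<gamma>. \<Sum>j<m. \<bar>\<psi> j (\<gamma> a)\<bar>"
  have "nu (act h a) = (\<Sum>\<gamma>\<in>Gam. ?F (Tr h \<gamma>))"
    unfolding nu_def by (simp add: Tr_app[OF a])
  also have "\<dots> = sum ?F (Tr h ` Gam)" using sum.reindex[OF Tr_inj[OF h], of ?F] by simp
  also have "\<dots> = nu a" unfolding Tr_image[OF h] nu_def ..
  finally show ?thesis .
qed

end


context ctx3
begin

lemma int_min_ex:
  assumes "U \<noteq> {}" "\<forall>x\<in>U. (L::int) \<le> f x"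
  shows "\<exists>x0\<in>U. \<forall>x\<in>U. f x0 \<le> f x"
proof -
  obtain y where y: "y \<in> U" using assms(1) by blast
  let ?P = "\<lambda>n::nat. \<exists>x\<in>U. f x = L + int n"
  have "?P (nat (f y - L))" using y assms(2) by (intro bexI[of _ y]) auto
  then have "?P (LEAST n. ?P n)" by (rule LeastI)
  then obtain x0 where x0: "x0 \<in> U" "f x0 = L + int (LEAST n. ?P n)" by blast
  have "f x0 \<le> f x" if x: "x \<in> U" for x
  proof -
    have "?P (nat (f x - L))" using x assms(2) by (intro bexI[of _ x]) auto
    then have "(LEAST n. ?P n) \<le> nat (f x - L)" by (rule Least_le)
    then have le: "int (LEAST n. ?P n) \<le> int (nat (f x - L))" by (rule of_nat_mono)
    have "L \<le> f x" using assms(2) x by blast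
    then have "int (nat (f x - L)) = f x - L" by simp
    then show ?thesis using x0(2) le by linarith
  qed
  then show ?thesis using x0(1) by blast
qed


lemma undist_R:
  assumes K: "K \<ge> 0" and step: "\<forall>s\<in>Sig. \<forall>e\<in>carrier EE. nu (fst (e \<otimes>\<^bsub>EE\<^esub> s)) \<le> nu (fst e) + K"
  shows "\<forall>e\<in>carrier EE. nu (fst e) \<le> K * int (len e) + nu (inv (\<sigma> \<one>\<^bsub>G\<^esub> \<one>\<^bsub>G\<^esub>))"
proof -
  have W: "set ws \<subseteq> Sig \<Longrightarrow> nu (fst (wprod ws)) \<le> K * int (length ws) + nu (inv (\<sigma> \<one>\<^bsub>G\<^esub> \<one>\<^bsub>G\<^esub>))" for ws
  proof (induct ws rule: rev_induct)
    case Nil then show ?case by (simp add: wprod_def EE_one)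
  next
    case (snoc s ws)
    have s: "s \<in> Sig" and ws: "set ws \<subseteq> Sig" using snoc.prems by auto
    have sc: "s \<in> carrier EE" using s Sig_carrier by blast
    have wc: "wprod ws \<in> carrier EE" using wprod_closed ws Sig_carrier by blast
    have "wprod (ws @ [s]) = wprod ws \<otimes>\<^bsub>EE\<^esub> wprod [s]" using wprod_append[of ws "[s]"] ws sc Sig_carrier by auto
    also have "wprod [s] = s" using sc by (simp add: wprod_def monoid.r_one[OF EEm])
    finally have "nu (fst (wprod (ws @ [s]))) \<le> nu (fst (wprod ws)) + K" using step s wc by simp
    then show ?case using snoc.hyps[OF ws] by (simp add: algebra_simps)
  qed
  show ?thesis
  proof
    fix e assume "e \<in> carrier EE"
    then obtain ws where "set ws \<subseteq> Sig" "length ws = len e" "wprod ws = e" using len_ex by blast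
    then show "nu (fst e) \<le> K * int (len e) + nu (inv (\<sigma> \<one>\<^bsub>G\<^esub> \<one>\<^bsub>G\<^esub>))" using W by metis
  qed
qed

lemma undist_L:
  assumes K: "K \<ge> 0" and step: "\<forall>s\<in>Sig. \<forall>e\<in>carrier EE. nu (fst (s \<otimes>\<^bsub>EE\<^esub> e)) \<le> nu (fst e) + K"
  shows "\<forall>e\<in>carrier EE. nu (fst e) \<le> K * int (len e) + nu (inv (\<sigma> \<one>\<^bsub>G\<^esub> \<one>\<^bsub>G\<^esub>))"
proof -
  have W: "set ws \<subseteq> Sig \<Longrightarrow> nu (fst (wprod ws)) \<le> K * int (length ws) + nu (inv (\<sigma> \<one>\<^bsub>G\<^esub> \<one>\<^bsub>G\<^esub>))" for ws
  proof (induct ws)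
    case Nil then show ?case by (simp add: wprod_def EE_one)
  next
    case (Cons s ws)
    have s: "s \<in> Sig" and ws: "set ws \<subseteq> Sig" using Cons.prems by auto
    have wc: "wprod ws \<in> carrier EE" using wprod_closed ws Sig_carrier by blast
    have "wprod (s # ws) = s \<otimes>\<^bsub>EE\<^esub> wprod ws" by (simp add: wprod_def)
    then have "nu (fst (wprod (s # ws))) \<le> nu (fst (wprod ws)) + K" using step s wc by simp
    then show ?case using Cons.hyps[OF ws] by (simp add: algebra_simps)
  qed
  show ?thesis
  proof
    fix e assume "e \<in> carrier EE"
    then obtain ws where "set ws \<subseteq> Sig" "length ws = len e" "wprod ws = e" using len_ex by blast
    then show "nu (fst e) \<le> K * int (len e) + nu (inv (\<sigma> \<one>\<^bsub>G\<^esub> \<one>\<^bsub>G\<^esub>))" using W by metis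
  qed
qed

lemma sum_bound_mem:
  assumes "finite S" "x \<in> S" "\<forall>y\<in>S. (0::int) \<le> f y"
  shows "f x \<le> sum f S"
  using assms by (intro member_le_sum) auto

lemma undist:
  assumes WB: "(\<forall>h\<in>carrier G. finite ((\<lambda>g. \<sigma> g h) ` carrier G)) \<or> (\<forall>g\<in>carrier G. finite ((\<lambda>h. \<sigma> g h) ` carrier G))"
  shows "\<exists>K K1. K \<ge> 0 \<and> (\<forall>e\<in>carrier EE. nu (fst e) \<le> K * int (len e) + K1)"
  using WB
proof
  assume R: "\<forall>h\<in>carrier G. finite ((\<lambda>g. \<sigma> g h) ` carrier G)"
  define K where "K = (\<Sum>s\<in>Sig. nu (fst s) + (\<Sum>x\<in>(\<lambda>g. \<sigma> g (snd s)) ` carrier G. nu x))"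
  have K0: "K \<ge> 0" unfolding K_def by (intro sum_nonneg add_nonneg_nonneg nu_nonneg)
  have step: "\<forall>s\<in>Sig. \<forall>e\<in>carrier EE. nu (fst (e \<otimes>\<^bsub>EE\<^esub> s)) \<le> nu (fst e) + K"
  proof (intro ballI)
    fix s e assume s: "s \<in> Sig" and e: "e \<in> carrier EE"
    let ?pr = "e \<otimes>\<^bsub>EE\<^esub> s"
    obtain b h where sb: "s = (b, h)" and b: "b \<in> carrier A" and h: "h \<in> carrier G"
      using s Sig_carrier unfolding EE_carrier by auto
    obtain a g where ea: "e = (a, g)" and a: "a \<in> carrier A" and g: "g \<in> carrier G"
      using e unfolding EE_carrier by auto
    have fin: "finite ((\<lambda>g. \<sigma> g h) ` carrier G)" using R h by blast
    have eq: "nu (fst ?pr) = nu (act h a \<otimes> b \<otimes> \<sigma> g h)" unfolding sb ea EE_mult by simp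
    have 0: "nu (fst ?pr) \<le> nu (act h a) + nu b + nu (\<sigma> g h)"
      unfolding eq using nu_m[of "act h a \<otimes> b" "\<sigma> g h"] nu_m[of "act h a" b] a b h g sig_closed by simp
    have 00: "nu (act h a) = nu a" using nu_act h a by simp
    have 000: "nu (\<sigma> g h) \<le> (\<Sum>x\<in>(\<lambda>g. \<sigma> g h) ` carrier G. nu x)"
      using fin g by (intro sum_bound_mem) (auto simp: nu_nonneg)
    have 1: "nu (fst (e \<otimes>\<^bsub>EE\<^esub> s)) \<le> nu a + nu b + (\<Sum>x\<in>(\<lambda>g. \<sigma> g h) ` carrier G. nu x)" using 0 00 000 by linarith
    have "nu b + (\<Sum>x\<in>(\<lambda>g. \<sigma> g h) ` carrier G. nu x) \<le> K"
    proof -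
      have "nu (fst s) + (\<Sum>x\<in>(\<lambda>g. \<sigma> g (snd s)) ` carrier G. nu x) \<le> K"
        unfolding K_def by (rule sum_bound_mem[where f="\<lambda>s. nu (fst s) + (\<Sum>x\<in>(\<lambda>g. \<sigma> g (snd s)) ` carrier G. nu x)", OF Sig_finite s])
          (auto intro!: add_nonneg_nonneg sum_nonneg nu_nonneg)
      then show ?thesis using sb by simp
    qed
    then show "nu (fst (e \<otimes>\<^bsub>EE\<^esub> s)) \<le> nu (fst e) + K" using 1 unfolding ea by simp
  qed
  show ?thesis using undist_R[OF K0 step] K0 by blast
next
  assume L: "\<forall>g\<in>carrier G. finite ((\<lambda>h. \<sigma> g h) ` carrier G)"
  define K where "K = (\<Sum>s\<in>Sig. nu (fst s) + (\<Sum>x\<in>(\<lambda>g. \<sigma> (snd s) g) ` carrier G. nu x))"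
  have K0: "K \<ge> 0" unfolding K_def by (intro sum_nonneg add_nonneg_nonneg nu_nonneg)
  have step: "\<forall>s\<in>Sig. \<forall>e\<in>carrier EE. nu (fst (s \<otimes>\<^bsub>EE\<^esub> e)) \<le> nu (fst e) + K"
  proof (intro ballI)
    fix s e assume s: "s \<in> Sig" and e: "e \<in> carrier EE"
    let ?pr = "s \<otimes>\<^bsub>EE\<^esub> e"
    obtain b h where sb: "s = (b, h)" and b: "b \<in> carrier A" and h: "h \<in> carrier G"
      using s Sig_carrier unfolding EE_carrier by auto
    obtain a g where ea: "e = (a, g)" and a: "a \<in> carrier A" and g: "g \<in> carrier G"
      using e unfolding EE_carrier by auto
    have fin: "finite ((\<lambda>g. \<sigma> h g) ` carrier G)" using L h by blast
    have eq: "nu (fst ?pr) = nu (act g b \<otimes> a \<otimes> \<sigma> h g)" unfolding sb ea EE_mult by simp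
    have 0: "nu (fst ?pr) \<le> nu (act g b) + nu a + nu (\<sigma> h g)"
      unfolding eq using nu_m[of "act g b \<otimes> a" "\<sigma> h g"] nu_m[of "act g b" a] a b h g sig_closed by simp
    have 00: "nu (act g b) = nu b" using nu_act g b by simp
    have 000: "nu (\<sigma> h g) \<le> (\<Sum>x\<in>(\<lambda>g. \<sigma> h g) ` carrier G. nu x)"
      using fin g by (intro sum_bound_mem) (auto simp: nu_nonneg)
    have 1: "nu (fst (s \<otimes>\<^bsub>EE\<^esub> e)) \<le> nu b + nu a + (\<Sum>x\<in>(\<lambda>g. \<sigma> h g) ` carrier G. nu x)" using 0 00 000 by linarith
    have "nu b + (\<Sum>x\<in>(\<lambda>g. \<sigma> h g) ` carrier G. nu x) \<le> K"
    proof -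
      have "nu (fst s) + (\<Sum>x\<in>(\<lambda>g. \<sigma> (snd s) g) ` carrier G. nu x) \<le> K"
        unfolding K_def by (rule sum_bound_mem[where f="\<lambda>s. nu (fst s) + (\<Sum>x\<in>(\<lambda>g. \<sigma> (snd s) g) ` carrier G. nu x)", OF Sig_finite s])
          (auto intro!: add_nonneg_nonneg sum_nonneg nu_nonneg)
      then show ?thesis using sb by simp
    qed
    then show "nu (fst (s \<otimes>\<^bsub>EE\<^esub> e)) \<le> nu (fst e) + K" using 1 unfolding ea by simp
  qed
  show ?thesis using undist_L[OF K0 step] K0 by blast
qed

end


locale ctx4 = ctx3 +
  fixes K K1 :: int
  assumes K0: "K \<ge> 0" and UB: "\<forall>e\<in>carrier EE. nu (fst e) \<le> K * int (len e) + K1"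
begin

definition val where "val j \<gamma> g a = K * int (len (a, g)) - \<psi> j (\<gamma> a)"

lemma val_lb:
  assumes "j < m" "\<gamma> \<in> Gam" "g \<in> carrier G" "a \<in> carrier A"
  shows "- K1 \<le> val j \<gamma> g a"
proof -
  have "\<psi> j (\<gamma> a) \<le> \<bar>\<psi> j (\<gamma> a)\<bar>" by simp
  also have "\<dots> \<le> nu a" using psi_le_nu assms by blast
  also have "\<dots> \<le> K * int (len (a, g)) + K1" using UB assms unfolding EE_carrier by force
  finally show ?thesis unfolding val_def by simp
qed

definition amin where "amin j \<gamma> g = (SOME a. a \<in> carrier A \<and> (\<forall>b\<in>carrier A. val j \<gamma> g a \<le> val j \<gamma> g b))"
definition M where "M j \<gamma> g = val j \<gamma> g (amin j \<gamma> g)"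

lemma amin:
  assumes "j < m" "\<gamma> \<in> Gam" "g \<in> carrier G"
  shows "amin j \<gamma> g \<in> carrier A" "\<forall>b\<in>carrier A. M j \<gamma> g \<le> val j \<gamma> g b"
proof -
  have "\<exists>a\<in>carrier A. \<forall>b\<in>carrier A. val j \<gamma> g a \<le> val j \<gamma> g b"
    using int_min_ex[of "carrier A" "-K1" "val j \<gamma> g"] val_lb[OF assms] by blast
  then have "\<exists>a. a \<in> carrier A \<and> (\<forall>b\<in>carrier A. val j \<gamma> g a \<le> val j \<gamma> g b)" by blast
  then have "amin j \<gamma> g \<in> carrier A \<and> (\<forall>b\<in>carrier A. val j \<gamma> g (amin j \<gamma> g) \<le> val j \<gamma> g b)"
    unfolding amin_def by (rule someI_ex)
  then show "amin j \<gamma> g \<in> carrier A" "\<forall>b\<in>carrier A. M j \<gamma> g \<le> val j \<gamma> g b" unfolding M_def by auto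
qed

lemma Kmono: "x \<le> y \<Longrightarrow> K * int x \<le> K * int y"
  using K0 by (simp add: mult_left_mono)

lemma I1:
  assumes j: "j < m" and ga: "\<gamma> \<in> Gam" and g: "g \<in> carrier G" and h: "h \<in> carrier G"
  shows "M j \<gamma> (g \<otimes>\<^bsub>G\<^esub> h) \<le> M j (Tr h \<gamma>) g + M j \<gamma> h - \<psi> j (\<gamma> (\<sigma> g h))"
proof -
  have tg: "Tr h \<gamma> \<in> Gam" using Tr_Gam[OF h ga] .
  define a where "a = amin j (Tr h \<gamma>) g"
  define b where "b = amin j \<gamma> h"
  have a: "a \<in> carrier A" unfolding a_def using amin[OF j tg g] by blast
  have b: "b \<in> carrier A" unfolding b_def using amin[OF j ga h] by blast
  have s: "\<sigma> g h \<in> carrier A" using sig_closed g h by blast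
  define c where "c = act h a \<otimes> b \<otimes> \<sigma> g h"
  have c: "c \<in> carrier A" unfolding c_def using a b s h by simp
  have prod: "(a, g) \<otimes>\<^bsub>EE\<^esub> (b, h) = (c, g \<otimes>\<^bsub>G\<^esub> h)" unfolding c_def EE_mult ..
  have "len (c, g \<otimes>\<^bsub>G\<^esub> h) \<le> len (a, g) + len (b, h)"
    using len_mult[of "(a, g)" "(b, h)"] a b g h unfolding prod EE_carrier by simp
  then have L: "K * int (len (c, g \<otimes>\<^bsub>G\<^esub> h)) \<le> K * int (len (a, g)) + K * int (len (b, h))"
    using Kmono by (metis of_nat_add distrib_left)
  have P: "\<psi> j (\<gamma> c) = \<psi> j (Tr h \<gamma> a) + \<psi> j (\<gamma> b) + \<psi> j (\<gamma> (\<sigma> g h))"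
    unfolding c_def Tr_app[OF a] using a b s h ga j by (simp add: Gam_m Gam_app psi_hom)
  have "M j \<gamma> (g \<otimes>\<^bsub>G\<^esub> h) \<le> val j \<gamma> (g \<otimes>\<^bsub>G\<^esub> h) c" using amin(2)[OF j ga] g h c by simp
  also have "\<dots> \<le> val j (Tr h \<gamma>) g a + val j \<gamma> h b - \<psi> j (\<gamma> (\<sigma> g h))"
    unfolding val_def using L P by linarith
  also have "val j (Tr h \<gamma>) g a = M j (Tr h \<gamma>) g" unfolding M_def a_def ..
  also have "val j \<gamma> h b = M j \<gamma> h" unfolding M_def b_def ..
  finally show ?thesis by simp
qed

lemma I2:
  assumes j: "j < m" and ga: "\<gamma> \<in> Gam" and g: "g \<in> carrier G" and h: "h \<in> carrier G"
  shows "M j \<gamma> h \<le> K * int (len (inv\<^bsub>EE\<^esub> (\<one>, g))) + M j \<gamma> (g \<otimes>\<^bsub>G\<^esub> h) + \<psi> j (\<gamma> (\<sigma> g h))"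
proof -
  have gh: "g \<otimes>\<^bsub>G\<^esub> h \<in> carrier G" using g h by simp
  define c where "c = amin j \<gamma> (g \<otimes>\<^bsub>G\<^esub> h)"
  have c: "c \<in> carrier A" unfolding c_def using amin[OF j ga gh] by blast
  have s: "\<sigma> g h \<in> carrier A" using sig_closed g h by blast
  define b where "b = c \<otimes> inv (\<sigma> g h)"
  have b: "b \<in> carrier A" unfolding b_def using c s by simp
  have prod: "(\<one>, g) \<otimes>\<^bsub>EE\<^esub> (b, h) = (c, g \<otimes>\<^bsub>G\<^esub> h)"
    unfolding EE_mult b_def using c s h by (simp add: A.m_assoc)
  have "len (b, h) \<le> len (inv\<^bsub>EE\<^esub> (\<one>, g)) + len (c, g \<otimes>\<^bsub>G\<^esub> h)"
    using len_left[of "(\<one>, g)" "(b, h)"] b g h unfolding prod EE_carrier by simp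
  then have L: "K * int (len (b, h)) \<le> K * int (len (inv\<^bsub>EE\<^esub> (\<one>, g))) + K * int (len (c, g \<otimes>\<^bsub>G\<^esub> h))"
    using Kmono by (metis of_nat_add distrib_left)
  have P: "\<psi> j (\<gamma> b) = \<psi> j (\<gamma> c) - \<psi> j (\<gamma> (\<sigma> g h))"
    unfolding b_def using c s ga j by (simp add: Gam_m Gam_app Gam_inv psi_hom psi_inv)
  have "M j \<gamma> h \<le> val j \<gamma> h b" using amin(2)[OF j ga h] b by simp
  also have "\<dots> \<le> K * int (len (inv\<^bsub>EE\<^esub> (\<one>, g))) + val j \<gamma> (g \<otimes>\<^bsub>G\<^esub> h) c + \<psi> j (\<gamma> (\<sigma> g h))"
    unfolding val_def using L P by linarith
  also have "val j \<gamma> (g \<otimes>\<^bsub>G\<^esub> h) c = M j \<gamma> (g \<otimes>\<^bsub>G\<^esub> h)" unfolding M_def c_def ..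
  finally show ?thesis by simp
qed

lemma I3:
  assumes j: "j < m" and ga: "\<gamma> \<in> Gam" and g: "g \<in> carrier G" and h: "h \<in> carrier G"
  shows "M j (Tr h \<gamma>) g \<le> K * int (len (inv\<^bsub>EE\<^esub> (\<one>, h))) + M j \<gamma> (g \<otimes>\<^bsub>G\<^esub> h) + \<psi> j (\<gamma> (\<sigma> g h))"
proof -
  have tg: "Tr h \<gamma> \<in> Gam" using Tr_Gam[OF h ga] .
  have gh: "g \<otimes>\<^bsub>G\<^esub> h \<in> carrier G" using g h by simp
  define c where "c = amin j \<gamma> (g \<otimes>\<^bsub>G\<^esub> h)"
  have c: "c \<in> carrier A" unfolding c_def using amin[OF j ga gh] by blast
  have s: "\<sigma> g h \<in> carrier A" using sig_closed g h by blast
  define a where "a = act (inv\<^bsub>G\<^esub> h) (c \<otimes> inv (\<sigma> g h))"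
  have a: "a \<in> carrier A" unfolding a_def using c s h by simp
  have ha: "act h a = c \<otimes> inv (\<sigma> g h)" unfolding a_def using act_invG2[OF h] c s by simp
  have prod: "(a, g) \<otimes>\<^bsub>EE\<^esub> (\<one>, h) = (c, g \<otimes>\<^bsub>G\<^esub> h)"
    unfolding EE_mult ha using c s h by (simp add: A.m_assoc)
  have "len (a, g) \<le> len (c, g \<otimes>\<^bsub>G\<^esub> h) + len (inv\<^bsub>EE\<^esub> (\<one>, h))"
    using len_right[of "(a, g)" "(\<one>, h)"] a g h unfolding prod EE_carrier by simp
  then have L: "K * int (len (a, g)) \<le> K * int (len (c, g \<otimes>\<^bsub>G\<^esub> h)) + K * int (len (inv\<^bsub>EE\<^esub> (\<one>, h)))"
    using Kmono by (metis of_nat_add distrib_left)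
  have P: "\<psi> j (Tr h \<gamma> a) = \<psi> j (\<gamma> c) - \<psi> j (\<gamma> (\<sigma> g h))"
    unfolding Tr_app[OF a] ha using c s ga j by (simp add: Gam_m Gam_app Gam_inv psi_hom psi_inv)
  have "M j (Tr h \<gamma>) g \<le> val j (Tr h \<gamma>) g a" using amin(2)[OF j tg g] a by simp
  also have "\<dots> \<le> K * int (len (inv\<^bsub>EE\<^esub> (\<one>, h))) + val j \<gamma> (g \<otimes>\<^bsub>G\<^esub> h) c + \<psi> j (\<gamma> (\<sigma> g h))"
    unfolding val_def using L P by linarith
  also have "val j \<gamma> (g \<otimes>\<^bsub>G\<^esub> h) c = M j \<gamma> (g \<otimes>\<^bsub>G\<^esub> h)" unfolding M_def c_def ..
  finally show ?thesis by simp
qed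

end


context ctx4
begin

lemma act_finprod:
  assumes g: "g \<in> carrier G" and f: "f \<in> I \<rightarrow> carrier A"
  shows "act g (finprod A f I) = finprod A (\<lambda>i. act g (f i)) I"
  using f
proof (induct I rule: infinite_finite_induct)
  case (infinite I) then show ?case using g by simp
next
  case empty then show ?case using g by simp
next
  case (insert x F)
  then have fx: "f x \<in> carrier A" and fF: "f \<in> F \<rightarrow> carrier A" by auto
  have "act g (finprod A f (insert x F)) = act g (f x \<otimes> finprod A f F)"
    using insert fx fF by (subst A.finprod_insert) auto
  also have "\<dots> = act g (f x) \<otimes> act g (finprod A f F)" using g fx fF by simp
  also have "\<dots> = act g (f x) \<otimes> finprod A (\<lambda>i. act g (f i)) F" using insert fF by simp
  also have "\<dots> = finprod A (\<lambda>i. act g (f i)) (insert x F)"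
    using insert fx fF g by (subst A.finprod_insert) (auto simp: Pi_def)
  finally show ?case .
qed

lemma act_pow_nat: "g \<in> carrier G \<Longrightarrow> a \<in> carrier A \<Longrightarrow> act g (a [^] (n::nat)) = (act g a) [^] n"
  using act_pow[of g a "int n"] by (simp add: A.pow_nat_int)

definition rep where "rep \<gamma> = (SOME r. r \<in> carrier G \<and> \<gamma> = restrict (act r) (carrier A))"

lemma rep: "\<gamma> \<in> Gam \<Longrightarrow> rep \<gamma> \<in> carrier G \<and> \<gamma> = restrict (act (rep \<gamma>)) (carrier A)"
proof -
  assume "\<gamma> \<in> Gam"
  then have "\<exists>r. r \<in> carrier G \<and> \<gamma> = restrict (act r) (carrier A)" using Gam_E by blast
  then show ?thesis unfolding rep_def by (rule someI_ex)
qed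

definition u where "u j \<gamma> = act (inv\<^bsub>G\<^esub> (rep \<gamma>)) (w j)"

lemma u_closed: "j < m \<Longrightarrow> \<gamma> \<in> Gam \<Longrightarrow> u j \<gamma> \<in> carrier A"
  unfolding u_def using rep w_closed by simp

lemma u_tw:
  assumes j: "j < m" and h: "h \<in> carrier G" and ga: "\<gamma> \<in> Gam"
  shows "u j \<gamma> = act h (u j (Tr h \<gamma>))"
proof -
  let ?r = "rep \<gamma>" and ?r' = "rep (Tr h \<gamma>)"
  have tg: "Tr h \<gamma> \<in> Gam" using Tr_Gam[OF h ga] .
  have r: "?r \<in> carrier G" and r': "?r' \<in> carrier G" using rep ga tg by auto
  have eqr: "act ?r' a = act ?r (act h a)" if "a \<in> carrier A" for a
  proof -
    have "Tr h \<gamma> a = restrict (act ?r') (carrier A) a" using fun_cong[OF conjunct2[OF rep[OF tg]], of a] .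
    then have "act ?r' a = Tr h \<gamma> a" using that by simp
    also have "\<dots> = \<gamma> (act h a)" using Tr_app[OF that] .
    also have "\<dots> = restrict (act ?r) (carrier A) (act h a)" using fun_cong[OF conjunct2[OF rep[OF ga]], of "act h a"] .
    also have "\<dots> = act ?r (act h a)" using that h by simp
    finally show ?thesis .
  qed
  have wj: "w j \<in> carrier A" using w_closed j by simp
  let ?x = "act h (act (inv\<^bsub>G\<^esub> ?r') (w j))"
  have xc: "?x \<in> carrier A" using h r' wj by simp
  have "act ?r ?x = w j"
  proof -
    have "act ?r ?x = act ?r' (act (inv\<^bsub>G\<^esub> ?r') (w j))" using eqr[of "act (inv\<^bsub>G\<^esub> ?r') (w j)"] r' wj by simp
    also have "\<dots> = w j" using act_invG2[OF r' wj] .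
    finally show ?thesis .
  qed
  then have "act (inv\<^bsub>G\<^esub> ?r) (act ?r ?x) = act (inv\<^bsub>G\<^esub> ?r) (w j)" by simp
  then have "?x = act (inv\<^bsub>G\<^esub> ?r) (w j)" using act_invG1[OF r xc] by simp
  then show ?thesis unfolding u_def by simp
qed

definition PP where "PP e = finprod A (\<lambda>\<gamma>. finprod A (\<lambda>j. u j \<gamma> [^] (e j \<gamma> :: int)) {..<m}) Gam"

lemma inner_closed: "\<gamma> \<in> Gam \<Longrightarrow> finprod A (\<lambda>j. u j \<gamma> [^] (e j \<gamma> :: int)) {..<m} \<in> carrier A"
  by (intro A.finprod_closed) (auto simp: u_closed)

lemma PP_closed: "PP e \<in> carrier A"
  unfolding PP_def by (intro A.finprod_closed) (auto simp: inner_closed)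

lemma PP_add: "PP (\<lambda>j \<gamma>. e1 j \<gamma> + e2 j \<gamma>) = PP e1 \<otimes> PP e2"
proof -
  have "PP (\<lambda>j \<gamma>. e1 j \<gamma> + e2 j \<gamma>) = finprod A (\<lambda>\<gamma>. finprod A (\<lambda>j. u j \<gamma> [^] e1 j \<gamma>) {..<m} \<otimes> finprod A (\<lambda>j. u j \<gamma> [^] e2 j \<gamma>) {..<m}) Gam"
    unfolding PP_def
  proof (rule A.finprod_cong')
    fix \<gamma> assume ga: "\<gamma> \<in> Gam"
    show "finprod A (\<lambda>j. u j \<gamma> [^] (e1 j \<gamma> + e2 j \<gamma>)) {..<m} = finprod A (\<lambda>j. u j \<gamma> [^] e1 j \<gamma>) {..<m} \<otimes> finprod A (\<lambda>j. u j \<gamma> [^] e2 j \<gamma>) {..<m}"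
      by (rule A.finprod_int_pow_add) (use ga u_closed in auto)
  qed (auto simp: inner_closed)
  also have "\<dots> = PP e1 \<otimes> PP e2" unfolding PP_def
    by (rule A.finprod_multf) (auto simp: inner_closed)
  finally show ?thesis .
qed

lemma PP_scale: "PP (\<lambda>j \<gamma>. c * e j \<gamma>) = (PP e) [^] (c::int)"
proof -
  have "PP (\<lambda>j \<gamma>. c * e j \<gamma>) = finprod A (\<lambda>\<gamma>. (finprod A (\<lambda>j. u j \<gamma> [^] e j \<gamma>) {..<m}) [^] c) Gam"
    unfolding PP_def
  proof (rule A.finprod_cong')
    fix \<gamma> assume ga: "\<gamma> \<in> Gam"
    have "finprod A (\<lambda>j. u j \<gamma> [^] (c * e j \<gamma>)) {..<m} = finprod A (\<lambda>j. (u j \<gamma> [^] e j \<gamma>) [^] c) {..<m}"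
      by (rule A.finprod_cong') (use ga u_closed in \<open>auto simp: A.int_pow_pow mult.commute\<close>)
    also have "\<dots> = (finprod A (\<lambda>j. u j \<gamma> [^] e j \<gamma>) {..<m}) [^] c"
      by (rule A.finprod_int_pow) (use ga u_closed in auto)
    finally show "finprod A (\<lambda>j. u j \<gamma> [^] (c * e j \<gamma>)) {..<m} = (finprod A (\<lambda>j. u j \<gamma> [^] e j \<gamma>) {..<m}) [^] c" .
  qed (auto simp: inner_closed)
  also have "\<dots> = (PP e) [^] c" unfolding PP_def
    by (rule A.finprod_int_pow) (auto simp: inner_closed)
  finally show ?thesis .
qed

lemma PP_neg: "PP (\<lambda>j \<gamma>. - e j \<gamma>) = inv (PP e)"
  using PP_scale[of "-1" e] PP_closed by (simp add: A.int_pow_neg)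

lemma PP_cong: "(\<And>j \<gamma>. j < m \<Longrightarrow> \<gamma> \<in> Gam \<Longrightarrow> e1 j \<gamma> = e2 j \<gamma>) \<Longrightarrow> PP e1 = PP e2"
  unfolding PP_def by (intro A.finprod_cong' refl) (auto simp: inner_closed u_closed)

lemma LAM:
  assumes a: "a \<in> carrier A"
  shows "PP (\<lambda>j \<gamma>. \<psi> j (\<gamma> a)) = a [^] (N * card Gam)"
proof -
  have "PP (\<lambda>j \<gamma>. \<psi> j (\<gamma> a)) = finprod A (\<lambda>\<gamma>. a [^] N) Gam"
    unfolding PP_def
  proof (rule A.finprod_cong')
    fix \<gamma> assume ga: "\<gamma> \<in> Gam"
    let ?r = "rep \<gamma>"
    have r: "?r \<in> carrier G" and ge: "\<gamma> = restrict (act ?r) (carrier A)" using rep[OF ga] by auto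
    have ra: "act ?r a \<in> carrier A" using r a by simp
    have gaa: "\<gamma> a = act ?r a" using fun_cong[OF ge, of a] a by simp
    have "finprod A (\<lambda>j. u j \<gamma> [^] \<psi> j (\<gamma> a)) {..<m} = finprod A (\<lambda>j. act (inv\<^bsub>G\<^esub> ?r) (w j [^] \<psi> j (act ?r a))) {..<m}"
      by (rule A.finprod_cong') (use r a w_closed gaa in \<open>auto simp: u_def Pi_def\<close>)
    also have "\<dots> = act (inv\<^bsub>G\<^esub> ?r) (finprod A (\<lambda>j. w j [^] \<psi> j (act ?r a)) {..<m})"
      by (rule act_finprod[symmetric]) (use r w_closed in auto)
    also have "\<dots> = act (inv\<^bsub>G\<^esub> ?r) ((act ?r a) [^] N)" using w_prod[OF ra] by simp
    also have "\<dots> = a [^] N" using act_pow_nat[of "inv\<^bsub>G\<^esub> ?r" "act ?r a" N] act_invG1[OF r a] r ra by simp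
    finally show "finprod A (\<lambda>j. u j \<gamma> [^] \<psi> j (\<gamma> a)) {..<m} = a [^] N" .
  qed (use a in auto)
  also have "\<dots> = (a [^] N) [^] card Gam" using a by (simp add: A.finprod_const)
  also have "\<dots> = a [^] (N * card Gam)" using a by (simp add: A.nat_pow_pow)
  finally show ?thesis .
qed

definition kk where "kk x = PP (\<lambda>j \<gamma>. M j \<gamma> x)"

lemma TW:
  assumes h: "h \<in> carrier G"
  shows "PP (\<lambda>j \<gamma>. M j (Tr h \<gamma>) g) = act h (kk g)"
proof -
  let ?F = "\<lambda>\<gamma>'. finprod A (\<lambda>j. act h (u j \<gamma>') [^] M j \<gamma>' g) {..<m}"
  have Fc: "?F \<in> Gam \<rightarrow> carrier A" using h u_closed by (auto intro!: A.finprod_closed)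
  have "PP (\<lambda>j \<gamma>. M j (Tr h \<gamma>) g) = finprod A (\<lambda>\<gamma>. ?F (Tr h \<gamma>)) Gam"
    unfolding PP_def
  proof (rule A.finprod_cong')
    fix \<gamma> assume ga: "\<gamma> \<in> Gam"
    show "finprod A (\<lambda>j. u j \<gamma> [^] M j (Tr h \<gamma>) g) {..<m} = ?F (Tr h \<gamma>)"
      by (rule A.finprod_cong') (use u_tw[OF _ h ga] h u_closed Tr_Gam[OF h ga] in auto)
  qed (use Fc Tr_Gam[OF h] in auto)
  also have "\<dots> = finprod A ?F (Tr h ` Gam)"
    using A.finprod_reindex[of ?F "Tr h" Gam] Fc Tr_inj[OF h] Tr_image[OF h] by simp
  also have "\<dots> = finprod A ?F Gam" using Tr_image[OF h] by simp
  also have "\<dots> = finprod A (\<lambda>\<gamma>'. act h (finprod A (\<lambda>j. u j \<gamma>' [^] M j \<gamma>' g) {..<m})) Gam"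
  proof (rule A.finprod_cong')
    fix \<gamma>' assume ga: "\<gamma>' \<in> Gam"
    have "finprod A (\<lambda>j. act h (u j \<gamma>') [^] M j \<gamma>' g) {..<m} = finprod A (\<lambda>j. act h (u j \<gamma>' [^] M j \<gamma>' g)) {..<m}"
      by (rule A.finprod_cong') (use h ga u_closed in auto)
    also have "\<dots> = act h (finprod A (\<lambda>j. u j \<gamma>' [^] M j \<gamma>' g) {..<m})"
      by (rule act_finprod[symmetric]) (use h ga u_closed in auto)
    finally show "?F \<gamma>' = act h (finprod A (\<lambda>j. u j \<gamma>' [^] M j \<gamma>' g) {..<m})" .
  qed (use h inner_closed[of _ "\<lambda>j \<gamma>. M j \<gamma> g"] in auto)
  also have "\<dots> = act h (kk g)" unfolding kk_def PP_def
    by (rule act_finprod[symmetric]) (use h inner_closed[of _ "\<lambda>j \<gamma>. M j \<gamma> g"] in auto)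
  finally show ?thesis .
qed

end


context ctx4
begin

definition NN where "NN = N * card Gam"

lemma Gam_ne: "Gam \<noteq> {}" unfolding Gam_def by auto

lemma NN_pos: "NN > 0"
  unfolding NN_def using N_pos Gam_fin Gam_ne by (simp add: card_gt_0_iff)

definition D where "D j \<gamma> g h = M j (Tr h \<gamma>) g + M j \<gamma> h - M j \<gamma> (g \<otimes>\<^bsub>G\<^esub> h) - \<psi> j (\<gamma> (\<sigma> g h))"

lemma PPD:
  assumes g: "g \<in> carrier G" and h: "h \<in> carrier G"
  shows "PP (\<lambda>j \<gamma>. D j \<gamma> g h) = inv (\<sigma> g h [^] NN) \<otimes> act h (kk g) \<otimes> kk h \<otimes> inv (kk (g \<otimes>\<^bsub>G\<^esub> h))"
proof -
  have "PP (\<lambda>j \<gamma>. D j \<gamma> g h) = PP (\<lambda>j \<gamma>. (- \<psi> j (\<gamma> (\<sigma> g h)) + M j (Tr h \<gamma>) g) + (M j \<gamma> h + - M j \<gamma> (g \<otimes>\<^bsub>G\<^esub> h)))"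
    unfolding D_def by (rule PP_cong) simp
  also have "\<dots> = (PP (\<lambda>j \<gamma>. - \<psi> j (\<gamma> (\<sigma> g h))) \<otimes> PP (\<lambda>j \<gamma>. M j (Tr h \<gamma>) g)) \<otimes> (PP (\<lambda>j \<gamma>. M j \<gamma> h) \<otimes> PP (\<lambda>j \<gamma>. - M j \<gamma> (g \<otimes>\<^bsub>G\<^esub> h)))"
    by (simp only: PP_add)
  also have "\<dots> = (inv (\<sigma> g h [^] NN) \<otimes> act h (kk g)) \<otimes> (kk h \<otimes> inv (kk (g \<otimes>\<^bsub>G\<^esub> h)))"
    unfolding PP_neg LAM[OF sig_closed[OF g h]] TW[OF h] kk_def NN_def ..
  also have "\<dots> = inv (\<sigma> g h [^] NN) \<otimes> act h (kk g) \<otimes> kk h \<otimes> inv (kk (g \<otimes>\<^bsub>G\<^esub> h))"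
    using g h sig_closed PP_closed unfolding kk_def by (simp add: A.m_assoc)
  finally show ?thesis .
qed

definition k1 where "k1 x = PP (\<lambda>j \<gamma>. M j \<gamma> x div int NN)"
definition rho where "rho x = PP (\<lambda>j \<gamma>. M j \<gamma> x mod int NN)"

lemma k1_closed: "k1 x \<in> carrier A" unfolding k1_def by (rule PP_closed)
lemma rho_closed: "rho x \<in> carrier A" unfolding rho_def by (rule PP_closed)
lemma kk_closed: "kk x \<in> carrier A" unfolding kk_def by (rule PP_closed)

lemma kk_split: "kk x = k1 x [^] (int NN) \<otimes> rho x"
proof -
  have "kk x = PP (\<lambda>j \<gamma>. int NN * (M j \<gamma> x div int NN) + M j \<gamma> x mod int NN)"
    unfolding kk_def by (rule PP_cong) simp
  also have "\<dots> = k1 x [^] (int NN) \<otimes> rho x"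
    unfolding PP_add PP_scale k1_def rho_def ..
  finally show ?thesis .
qed

lemma k1_pow: "k1 x [^] (int NN) = kk x \<otimes> inv (rho x)"
  using kk_split[of x] k1_closed rho_closed by (simp add: A.m_assoc)

definition ff where "ff x = inv (k1 x)"

lemma ff_closed: "ff x \<in> carrier A" unfolding ff_def using k1_closed by simp

definition tau where "tau g h = \<sigma> g h \<otimes> (act h (ff g) \<otimes> ff h \<otimes> inv (ff (g \<otimes>\<^bsub>G\<^esub> h)))"

lemma tau_closed: "g \<in> carrier G \<Longrightarrow> h \<in> carrier G \<Longrightarrow> tau g h \<in> carrier A"
  unfolding tau_def using sig_closed ff_closed by simp

lemma ff_pow: "ff x [^] (int NN) = inv (kk x \<otimes> inv (rho x))"
  unfolding ff_def using k1_closed by (simp add: A.int_pow_inv k1_pow)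

lemma tau_pow:
  assumes g: "g \<in> carrier G" and h: "h \<in> carrier G"
  shows "tau g h [^] (int NN) = inv (PP (\<lambda>j \<gamma>. D j \<gamma> g h)) \<otimes> act h (rho g) \<otimes> rho h \<otimes> inv (rho (g \<otimes>\<^bsub>G\<^esub> h))"
proof -
  have gh: "g \<otimes>\<^bsub>G\<^esub> h \<in> carrier G" using g h by simp
  have s: "\<sigma> g h \<in> carrier A" using sig_closed g h by blast
  note c = k1_closed rho_closed kk_closed ff_closed
  have "tau g h [^] (int NN) = \<sigma> g h [^] (int NN) \<otimes> (act h (ff g [^] (int NN)) \<otimes> ff h [^] (int NN) \<otimes> inv (ff (g \<otimes>\<^bsub>G\<^esub> h) [^] (int NN)))"
    unfolding tau_def using s h c by (simp add: A.int_pow_distrib A.int_pow_inv)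
  also have "\<dots> = \<sigma> g h [^] (int NN) \<otimes> (act h (inv (kk g \<otimes> inv (rho g))) \<otimes> inv (kk h \<otimes> inv (rho h)) \<otimes> inv (inv (kk (g \<otimes>\<^bsub>G\<^esub> h) \<otimes> inv (rho (g \<otimes>\<^bsub>G\<^esub> h)))))"
    unfolding ff_pow ..
  also have "\<dots> = inv (inv (\<sigma> g h [^] NN) \<otimes> act h (kk g) \<otimes> kk h \<otimes> inv (kk (g \<otimes>\<^bsub>G\<^esub> h))) \<otimes> act h (rho g) \<otimes> rho h \<otimes> inv (rho (g \<otimes>\<^bsub>G\<^esub> h))"
    using s h c by (simp add: A.inv_mult A.m_ac A.pow_nat_int del: A.l_inv A.r_inv A.Units_l_inv A.Units_r_inv)
  also have "\<dots> = inv (PP (\<lambda>j \<gamma>. D j \<gamma> g h)) \<otimes> act h (rho g) \<otimes> rho h \<otimes> inv (rho (g \<otimes>\<^bsub>G\<^esub> h))"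
    unfolding PPD[OF g h] ..
  finally show ?thesis .
qed

definition FinE where "FinE B = (\<lambda>d. PP (\<lambda>j \<gamma>. d (\<gamma>, j))) ` PiE (Gam \<times> {..<m}) (\<lambda>_. {0..(B::int)})"

lemma FinE_fin: "finite (FinE B)"
  unfolding FinE_def using Gam_fin by (intro finite_imageI finite_PiE) auto

lemma FinE_mem:
  assumes "\<And>j \<gamma>. j < m \<Longrightarrow> \<gamma> \<in> Gam \<Longrightarrow> 0 \<le> e j \<gamma> \<and> e j \<gamma> \<le> B"
  shows "PP e \<in> FinE B"
proof -
  define d where "d = restrict (\<lambda>p. e (snd p) (fst p)) (Gam \<times> {..<m})"
  have "d \<in> PiE (Gam \<times> {..<m}) (\<lambda>_. {0..B})" unfolding d_def using assms by auto
  moreover have "PP e = PP (\<lambda>j \<gamma>. d (\<gamma>, j))" unfolding d_def by (rule PP_cong) simp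
  ultimately show ?thesis unfolding FinE_def by blast
qed

lemma rho_mem: "rho x \<in> FinE (int NN - 1)"
  unfolding rho_def using NN_pos by (intro FinE_mem) (auto simp: int_ops)

definition Bnd where "Bnd x = (\<Sum>\<gamma>\<in>Gam. \<Sum>j<m. \<bar>M j \<gamma> x\<bar>)"

lemma M_le_Bnd: "\<gamma> \<in> Gam \<Longrightarrow> j < m \<Longrightarrow> M j \<gamma> x \<le> Bnd x"
proof -
  assume g: "\<gamma> \<in> Gam" and j: "j < m"
  have h1: "\<bar>M j \<gamma> x\<bar> \<le> (\<Sum>j<m. \<bar>M j \<gamma> x\<bar>)"
    by (rule member_le_sum[where f="\<lambda>j. \<bar>M j \<gamma> x\<bar>"]) (use j in auto)
  have h2: "(\<Sum>j<m. \<bar>M j \<gamma> x\<bar>) \<le> Bnd x" unfolding Bnd_def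
    by (rule member_le_sum[where f="\<lambda>\<gamma>. \<Sum>j<m. \<bar>M j \<gamma> x\<bar>"]) (use g Gam_fin in \<open>auto intro: sum_nonneg\<close>)
  show ?thesis using order_trans[OF h1 h2] by simp
qed

lemma D_bounds:
  assumes j: "j < m" and ga: "\<gamma> \<in> Gam" and g: "g \<in> carrier G" and h: "h \<in> carrier G"
  shows "0 \<le> D j \<gamma> g h"
    "D j \<gamma> g h \<le> K * int (len (inv\<^bsub>EE\<^esub> (\<one>, g))) + Bnd g"
    "D j \<gamma> g h \<le> K * int (len (inv\<^bsub>EE\<^esub> (\<one>, h))) + Bnd h"
proof -
  have X: "M j \<gamma> (g \<otimes>\<^bsub>G\<^esub> h) \<le> M j (Tr h \<gamma>) g + M j \<gamma> h - \<psi> j (\<gamma> (\<sigma> g h))"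
    by (rule I1[OF j ga g h])
  then show "0 \<le> D j \<gamma> g h" unfolding D_def by linarith
  show "D j \<gamma> g h \<le> K * int (len (inv\<^bsub>EE\<^esub> (\<one>, g))) + Bnd g"
    using I2[OF j ga g h] M_le_Bnd[OF Tr_Gam[OF h ga] j, of g] unfolding D_def by simp
  show "D j \<gamma> g h \<le> K * int (len (inv\<^bsub>EE\<^esub> (\<one>, h))) + Bnd h"
    using I3[OF j ga g h] M_le_Bnd[OF ga j, of h] unfolding D_def by simp
qed

lemma root_fin:
  assumes S: "finite S"
  shows "finite {t \<in> carrier A. t [^] (int NN) \<in> S}"
proof -
  have one: "finite {t \<in> carrier A. t [^] (int NN) = s}" for s
  proof (cases "{t \<in> carrier A. t [^] (int NN) = s} = {}")
    case True show ?thesis unfolding True by simp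
  next
    case False
    then obtain t0 where t0: "t0 \<in> carrier A" "t0 [^] (int NN) = s" by blast
    have "{t \<in> carrier A. t [^] (int NN) = s} \<subseteq> (\<lambda>x. t0 \<otimes> x) ` tors A (carrier A)"
    proof
      fix t assume t: "t \<in> {t \<in> carrier A. t [^] (int NN) = s}"
      then have tc: "t \<in> carrier A" and ts: "t [^] (int NN) = s" by auto
      have "(inv t0 \<otimes> t) [^] NN = inv (t0 [^] (int NN)) \<otimes> t [^] (int NN)"
        using t0 tc by (simp add: A.pow_nat_int A.int_pow_distrib A.int_pow_inv)
      also have "\<dots> = \<one>" using t0(1) t0(2)[symmetric] ts[symmetric] tc by simp
      finally have "(inv t0 \<otimes> t) [^] NN = \<one>" .
      then have "inv t0 \<otimes> t \<in> tors A (carrier A)" unfolding tors_def using NN_pos t0 tc by auto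
      moreover have "t = t0 \<otimes> (inv t0 \<otimes> t)" using t0 tc by (simp add: A.m_assoc[symmetric])
      ultimately show "t \<in> (\<lambda>x. t0 \<otimes> x) ` tors A (carrier A)" by blast
    qed
    then show ?thesis using tors_fin finite_subset by blast
  qed
  have "{t \<in> carrier A. t [^] (int NN) \<in> S} = (\<Union>s\<in>S. {t \<in> carrier A. t [^] (int NN) = s})" by auto
  then show ?thesis using S one by simp
qed

lemma tau_right: "right_weakly_bounded G tau"
  unfolding right_weakly_bounded_def
proof
  fix h assume h: "h \<in> carrier G"
  let ?B = "K * int (len (inv\<^bsub>EE\<^esub> (\<one>, h))) + Bnd h"
  let ?S = "(\<lambda>(x, y, v). inv x \<otimes> y \<otimes> rho h \<otimes> inv v) ` (FinE ?B \<times> act h ` FinE (int NN - 1) \<times> FinE (int NN - 1))"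
  have Sfin: "finite ?S" using FinE_fin by simp
  have "(\<lambda>g. tau g h) ` carrier G \<subseteq> {t \<in> carrier A. t [^] (int NN) \<in> ?S}"
  proof
    fix t assume "t \<in> (\<lambda>g. tau g h) ` carrier G"
    then obtain g where g: "g \<in> carrier G" and t: "t = tau g h" by blast
    have P: "PP (\<lambda>j \<gamma>. D j \<gamma> g h) \<in> FinE ?B"
      by (rule FinE_mem) (use D_bounds[OF _ _ g h] in auto)
    have "tau g h [^] (int NN) \<in> ?S"
      unfolding tau_pow[OF g h] using P rho_mem by force
    then show "t \<in> {t \<in> carrier A. t [^] (int NN) \<in> ?S}" using t tau_closed g h by simp
  qed
  then show "finite ((\<lambda>g. tau g h) ` carrier G)" using root_fin[OF Sfin] finite_subset by blast
qed

lemma tau_left: "left_weakly_bounded G tau"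
  unfolding left_weakly_bounded_def
proof
  fix g assume g: "g \<in> carrier G"
  let ?B = "K * int (len (inv\<^bsub>EE\<^esub> (\<one>, g))) + Bnd g"
  let ?S = "(\<lambda>(x, y, z, v). inv x \<otimes> y \<otimes> z \<otimes> inv v) ` (FinE ?B \<times> (\<lambda>\<gamma>. \<gamma> (rho g)) ` Gam \<times> FinE (int NN - 1) \<times> FinE (int NN - 1))"
  have Sfin: "finite ?S" using FinE_fin Gam_fin by simp
  have "(\<lambda>h. tau g h) ` carrier G \<subseteq> {t \<in> carrier A. t [^] (int NN) \<in> ?S}"
  proof
    fix t assume "t \<in> (\<lambda>h. tau g h) ` carrier G"
    then obtain h where h: "h \<in> carrier G" and t: "t = tau g h" by blast
    have P: "PP (\<lambda>j \<gamma>. D j \<gamma> g h) \<in> FinE ?B"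
      by (rule FinE_mem) (use D_bounds[OF _ _ g h] in auto)
    have Y: "act h (rho g) \<in> (\<lambda>\<gamma>. \<gamma> (rho g)) ` Gam"
      by (rule image_eqI[where x="restrict (act h) (carrier A)"]) (use h rho_closed in \<open>auto simp: Gam_def\<close>)
    have "tau g h [^] (int NN) \<in> ?S"
      unfolding tau_pow[OF g h] using P rho_mem Y by force
    then show "t \<in> {t \<in> carrier A. t [^] (int NN) \<in> ?S}" using t tau_closed g h by simp
  qed
  then show "finite ((\<lambda>h. tau g h) ` carrier G)" using root_fin[OF Sfin] finite_subset by blast
qed

end


context ctx
begin

lemma cob_cocycle:
  assumes f: "\<And>x. x \<in> carrier G \<Longrightarrow> f x \<in> carrier A"
    and g: "g \<in> carrier G" and h1: "h1 \<in> carrier G" and h2: "h2 \<in> carrier G"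
  defines "C \<equiv> \<lambda>g h. act h (f g) \<otimes> f h \<otimes> inv (f (g \<otimes>\<^bsub>G\<^esub> h))"
  shows "C g (h1 \<otimes>\<^bsub>G\<^esub> h2) = act h2 (C g h1) \<otimes> C (g \<otimes>\<^bsub>G\<^esub> h1) h2 \<otimes> inv (C h1 h2)"
proof -
  have gh1: "g \<otimes>\<^bsub>G\<^esub> h1 \<in> carrier G" and h12: "h1 \<otimes>\<^bsub>G\<^esub> h2 \<in> carrier G"
    and gh12: "g \<otimes>\<^bsub>G\<^esub> h1 \<otimes>\<^bsub>G\<^esub> h2 \<in> carrier G" using g h1 h2 by auto
  have as: "g \<otimes>\<^bsub>G\<^esub> (h1 \<otimes>\<^bsub>G\<^esub> h2) = g \<otimes>\<^bsub>G\<^esub> h1 \<otimes>\<^bsub>G\<^esub> h2" using g h1 h2 by (simp add: G.m_assoc)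
  note fc = f[OF g] f[OF h1] f[OF h2] f[OF gh1] f[OF h12] f[OF gh12]
  have "act h2 (C g h1) \<otimes> C (g \<otimes>\<^bsub>G\<^esub> h1) h2 \<otimes> inv (C h1 h2)
      = (act h2 (act h1 (f g)) \<otimes> f (h1 \<otimes>\<^bsub>G\<^esub> h2) \<otimes> inv (f (g \<otimes>\<^bsub>G\<^esub> h1 \<otimes>\<^bsub>G\<^esub> h2)))
        \<otimes> ((act h2 (f h1) \<otimes> inv (act h2 (f h1))) \<otimes> (inv (act h2 (f (g \<otimes>\<^bsub>G\<^esub> h1))) \<otimes> act h2 (f (g \<otimes>\<^bsub>G\<^esub> h1)))
           \<otimes> (f h2 \<otimes> inv (f h2)))"
    unfolding C_def using fc g h1 h2 gh1
    by (simp add: A.inv_mult A.m_ac del: A.l_inv A.r_inv A.Units_l_inv A.Units_r_inv)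
  also have "\<dots> = act h2 (act h1 (f g)) \<otimes> f (h1 \<otimes>\<^bsub>G\<^esub> h2) \<otimes> inv (f (g \<otimes>\<^bsub>G\<^esub> h1 \<otimes>\<^bsub>G\<^esub> h2))"
    using fc g h1 h2 gh1 by simp
  also have "\<dots> = C g (h1 \<otimes>\<^bsub>G\<^esub> h2)" unfolding C_def as using act_mult[OF h1 h2 fc(1)] by simp
  finally show ?thesis by simp
qed

lemma twist_cocycle:
  assumes f: "\<And>x. x \<in> carrier G \<Longrightarrow> f x \<in> carrier A"
  shows "two_cocycle G A act (\<lambda>g h. \<sigma> g h \<otimes> (act h (f g) \<otimes> f h \<otimes> inv (f (g \<otimes>\<^bsub>G\<^esub> h))))"
  unfolding two_cocycle_def
proof (intro conjI ballI)
  fix g h assume "g \<in> carrier G" "h \<in> carrier G"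
  then show "\<sigma> g h \<otimes> (act h (f g) \<otimes> f h \<otimes> inv (f (g \<otimes>\<^bsub>G\<^esub> h))) \<in> carrier A"
    using sig_closed f by simp
next
  fix g h1 h2 assume g: "g \<in> carrier G" and h1: "h1 \<in> carrier G" and h2: "h2 \<in> carrier G"
  define C where "C = (\<lambda>g h. act h (f g) \<otimes> f h \<otimes> inv (f (g \<otimes>\<^bsub>G\<^esub> h)))"
  have Cc: "C x y \<in> carrier A" if "x \<in> carrier G" "y \<in> carrier G" for x y
    unfolding C_def using f that by simp
  have CC: "C g (h1 \<otimes>\<^bsub>G\<^esub> h2) = act h2 (C g h1) \<otimes> C (g \<otimes>\<^bsub>G\<^esub> h1) h2 \<otimes> inv (C h1 h2)"
    unfolding C_def by (rule cob_cocycle[OF f g h1 h2])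
  have gh1: "g \<otimes>\<^bsub>G\<^esub> h1 \<in> carrier G" using g h1 by simp
  note sc = sig_closed[OF g h1] sig_closed[OF gh1 h2] sig_closed[OF h1 h2]
  note cc = Cc[OF g h1] Cc[OF gh1 h2] Cc[OF h1 h2]
  have "\<sigma> g (h1 \<otimes>\<^bsub>G\<^esub> h2) \<otimes> C g (h1 \<otimes>\<^bsub>G\<^esub> h2)
      = (act h2 (\<sigma> g h1) \<otimes> \<sigma> (g \<otimes>\<^bsub>G\<^esub> h1) h2 \<otimes> inv (\<sigma> h1 h2)) \<otimes> (act h2 (C g h1) \<otimes> C (g \<otimes>\<^bsub>G\<^esub> h1) h2 \<otimes> inv (C h1 h2))"
    unfolding CC cocycle[OF g h1 h2] ..
  also have "\<dots> = act h2 (\<sigma> g h1 \<otimes> C g h1) \<otimes> (\<sigma> (g \<otimes>\<^bsub>G\<^esub> h1) h2 \<otimes> C (g \<otimes>\<^bsub>G\<^esub> h1) h2) \<otimes> inv (\<sigma> h1 h2 \<otimes> C h1 h2)"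
    using sc cc h2 by (simp add: A.inv_mult A.m_ac del: A.l_inv A.r_inv A.Units_l_inv A.Units_r_inv)
  finally show "\<sigma> g (h1 \<otimes>\<^bsub>G\<^esub> h2) \<otimes> (act (h1 \<otimes>\<^bsub>G\<^esub> h2) (f g) \<otimes> f (h1 \<otimes>\<^bsub>G\<^esub> h2) \<otimes> inv (f (g \<otimes>\<^bsub>G\<^esub> (h1 \<otimes>\<^bsub>G\<^esub> h2)))) =
      act h2 (\<sigma> g h1 \<otimes> (act h1 (f g) \<otimes> f h1 \<otimes> inv (f (g \<otimes>\<^bsub>G\<^esub> h1)))) \<otimes>
      (\<sigma> (g \<otimes>\<^bsub>G\<^esub> h1) h2 \<otimes> (act h2 (f (g \<otimes>\<^bsub>G\<^esub> h1)) \<otimes> f h2 \<otimes> inv (f (g \<otimes>\<^bsub>G\<^esub> h1 \<otimes>\<^bsub>G\<^esub> h2)))) \<otimes>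
      inv (\<sigma> h1 h2 \<otimes> (act h2 (f h1) \<otimes> f h2 \<otimes> inv (f (h1 \<otimes>\<^bsub>G\<^esub> h2))))"
    unfolding C_def .
qed

end

context ctx3
begin

lemma main_result:
  assumes WB: "(\<forall>h\<in>carrier G. finite ((\<lambda>g. \<sigma> g h) ` carrier G)) \<or> (\<forall>g\<in>carrier G. finite ((\<lambda>h. \<sigma> g h) ` carrier G))"
  shows "\<exists>\<tau>. two_cocycle G A act \<tau> \<and> cohomologous G A act \<sigma> \<tau> \<and> right_weakly_bounded G \<tau> \<and> left_weakly_bounded G \<tau>"
proof -
  obtain K K1 where K0: "K \<ge> 0" and UB: "\<forall>e\<in>carrier EE. nu (fst e) \<le> K * int (len e) + K1"
    using undist[OF WB] by blast
  interpret C4: ctx4 A G act \<sigma> SA SG N m \<psi> w K K1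
    by unfold_locales (use K0 UB in auto)
  have f: "C4.ff x \<in> carrier A" for x by (rule C4.ff_closed)
  have "two_cocycle G A act C4.tau"
    unfolding C4.tau_def[abs_def] by (rule twist_cocycle[OF f])
  moreover have "cohomologous G A act \<sigma> C4.tau"
    unfolding cohomologous_def using f by (intro exI[of _ C4.ff]) (auto simp: C4.tau_def)
  ultimately show ?thesis using C4.tau_right C4.tau_left by blast
qed

end

theorem theorem4p1:
  fixes G :: "('a, 'm) monoid_scheme" and A :: "('b, 'n) monoid_scheme"
    and act :: "'a \<Rightarrow> 'b \<Rightarrow> 'b" and \<sigma> :: "'a \<Rightarrow> 'a \<Rightarrow> 'b"
  assumes "group G" and "fin_gen_group G"
    and "comm_group A" and "fin_gen_group A"
    and "right_action_by_auts G A act"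
    and "finite_action_image G A act"
    and "two_cocycle G A act \<sigma>"
    and "right_weakly_bounded G \<sigma> \<or> left_weakly_bounded G \<sigma>"
  shows "\<exists>\<tau>. two_cocycle G A act \<tau> \<and> cohomologous G A act \<sigma> \<tau> \<and>
             right_weakly_bounded G \<tau> \<and> left_weakly_bounded G \<tau>"
proof -
  obtain SG where SG: "finite SG" "SG \<subseteq> carrier G" "generate G SG = carrier G"
    using assms(2) unfolding fin_gen_group_def by blast
  obtain SA where SA: "finite SA" "SA \<subseteq> carrier A" "generate A SA = carrier A"
    using assms(4) unfolding fin_gen_group_def by blast
  have ctxax: "ctx_axioms A G act \<sigma>"
  proof
    fix g assume "g \<in> carrier G"
    then show "act g \<in> hom A A" using assms(5) unfolding right_action_by_auts_def iso_def by blast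
  next
    fix a assume "a \<in> carrier A"
    then show "act \<one>\<^bsub>G\<^esub> a = a" using assms(5) unfolding right_action_by_auts_def by blast
  next
    fix g h a assume "g \<in> carrier G" "h \<in> carrier G" "a \<in> carrier A"
    then show "act (g \<otimes>\<^bsub>G\<^esub> h) a = act h (act g a)" using assms(5) unfolding right_action_by_auts_def by blast
  next
    show "finite ((\<lambda>g. restrict (act g) (carrier A)) ` carrier G)"
      using assms(6) unfolding finite_action_image_def .
  next
    fix g h assume "g \<in> carrier G" "h \<in> carrier G"
    then show "\<sigma> g h \<in> carrier A" using assms(7) unfolding two_cocycle_def by blast
  next
    fix g h1 h2 assume "g \<in> carrier G" "h1 \<in> carrier G" "h2 \<in> carrier G"
    then show "\<sigma> g (h1 \<otimes>\<^bsub>G\<^esub> h2) = act h2 (\<sigma> g h1) \<otimes>\<^bsub>A\<^esub> \<sigma> (g \<otimes>\<^bsub>G\<^esub> h1) h2 \<otimes>\<^bsub>A\<^esub> inv\<^bsub>A\<^esub> (\<sigma> h1 h2)"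
      using assms(7) unfolding two_cocycle_def by blast
  qed
  have cx: "ctx A G act \<sigma>" by (rule ctx.intro[OF assms(3) assms(1) ctxax])
  obtain N m \<psi> w where FG0: "fgdata A (generate A SA) N m \<psi> w"
    using comm_group.fg_struct[OF assms(3) SA(1) SA(2)] by blast
  have FG: "fgdata A (carrier A) N m \<psi> w" using FG0 SA(3) by simp
  have c2: "ctx2 A G act \<sigma> SA SG" by (rule ctx2.intro[OF cx]) (unfold_locales, use SA SG in auto)
  have c3: "ctx3 A G act \<sigma> SA SG N m \<psi> w" by (rule ctx3.intro[OF c2]) (unfold_locales, rule FG)
  have WB: "(\<forall>h\<in>carrier G. finite ((\<lambda>g. \<sigma> g h) ` carrier G)) \<or> (\<forall>g\<in>carrier G. finite ((\<lambda>h. \<sigma> g h) ` carrier G))"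
    using assms(8) unfolding right_weakly_bounded_def left_weakly_bounded_def .
  show ?thesis by (rule ctx3.main_result[OF c3 WB])
qed


end
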